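(* Consider the control system $\dot{\mathbf{x}}(s)=f(\mathbf{x}(s),\mathbf{u}(s))$ for $s\in[-t,0]$, $\mathbf{x}(-t)=x$, with $\mathbf{x}(s)\in\mathbb{R}^{n_x}$, measurable controls $\mathbf{u}(s)\in U\subset\mathbb{R}^{n_u}$, and $f$ Lipschitz continuous in the state. Let $g,l:\mathbb{R}^{n_x}\to\mathbb{R}$ be Lipschitz continuous, with unsafe set $\mathcal{X}_{\mathcal{U}}=\{x: g(x)\le 0\}$ and target set $\mathcal{X}_{\mathcal{T}}=\{x:l(x)\ge0\}$. Define the true value functions (Avoid) $V(x,t)=\sup_{\mathbf{u}(\cdot)}\min_{s\in[-t,0]}g(\mathbf{x}(s))$, and (ReachAvoid) $V(x,t)=\sup_{\mathbf{u}(\cdot)}\max_{s\in[-t,0]}\min\{l(\mathbf{x}(s)),\min_{\tau\in[-t,s]}g(\mathbf{x}(\tau))\}$. Let $\mathcal{D}=\{(x^i,u^i,v^i)\}_{i=1}^N$ with $u^i\in U$, $v^i=f(x^i,u^i)$, let $\mathcal{E}$ be a closed-valued set-valued map with $f(x,u^i)-v^i\in\mathcal{E}(x;x^i)$ for all $i$ and all $x$, and let $\widehat{H}(x,p)=\max_{i\in\{1,\dots,N\}}\min_{\widehat{v}^i\in v^i\oplus\mathcal{E}(x;x^i)}p^\top\widehat{v}^i$. Let the data-driven value function $\widehat{V}$ be the viscosity solution of the corresponding HJ variational inequality with $\widehat{H}$ in place of the Hamiltonian, namely (Avoid) $0=\min\{g(x)-\widehat{V}(x,t),\,-D_t\widehat{V}(x,t)+\widehat{H}(x,D_x\widehat{V}(x,t))\}$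 with $\widehat{V}(x,0)=g(x)$; (ReachAvoid) $0=\min\{g(x)-\widehat{V}(x,t),\ \max\{l(x)-\widehat{V}(x,t),\,-D_t\widehat{V}(x,t)+\widehat{H}(x,D_x\widehat{V}(x,t))\}\}$ with $\widehat{V}(x,0)=\min\{l(x),g(x)\}$. Then, for each of the two problems, $\widehat{V}(x,t)\le V(x,t)$ for all $x\in\mathbb{R}^{n_x}$ and $t\ge0$.
   Context: $\oplus$ is the Minkowski sum. The true value functions $V$ are (by dynamic programming) the viscosity solutions of the same variational inequalities with the true Hamiltonian $H(x,p)=\max_{u\in U}p^\top f(x,u)$. The condition $f(x,u^i)-v^i\in\mathcal{E}(x;x^i)$ (valid uncertainty sets) is a standing assumption under which the data-driven Hamiltonian is defined. *)

theory Defs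
  imports "HOL-Analysis.Analysis"
begin

definition admissible_control :: "'u::euclidean_space set \<Rightarrow> real \<Rightarrow> (real \<Rightarrow> 'u) \<Rightarrow> bool" where
  "admissible_control U t u \<longleftrightarrow>
     u \<in> borel_measurable (lebesgue_on {-t..0}) \<and> (\<forall>s\<in>{-t..0}. u s \<in> U)"

definition trajectory ::
  "('a::euclidean_space \<Rightarrow> 'u \<Rightarrow> 'a) \<Rightarrow> 'a \<Rightarrow> real \<Rightarrow> (real \<Rightarrow> 'u) \<Rightarrow> (real \<Rightarrow> 'a) \<Rightarrow> bool" where
  "trajectory f x0 t u xs \<longleftrightarrow>
     xs (-t) = x0 \<and>
     (\<forall>s\<in>{-t..0}. ((\<lambda>\<tau>. f (xs \<tau>) (u \<tau>)) has_integral (xs s - x0)) {-t..s})"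

definition V_avoid ::
  "('a::euclidean_space \<Rightarrow> 'u::euclidean_space \<Rightarrow> 'a) \<Rightarrow> 'u set \<Rightarrow> ('a \<Rightarrow> real) \<Rightarrow> 'a \<Rightarrow> real \<Rightarrow> real" where
  "V_avoid f U g x t =
     Sup {Inf ((\<lambda>s. g (xs s)) ` {-t..0}) | u xs. admissible_control U t u \<and> trajectory f x t u xs}"

definition V_reach_avoid ::
  "('a::euclidean_space \<Rightarrow> 'u::euclidean_space \<Rightarrow> 'a) \<Rightarrow> 'u set \<Rightarrow> ('a \<Rightarrow> real) \<Rightarrow> ('a \<Rightarrow> real)
     \<Rightarrow> 'a \<Rightarrow> real \<Rightarrow> real" where
  "V_reach_avoid f U l g x t =
     Sup {Sup ((\<lambda>s. min (l (xs s)) (Inf ((\<lambda>\<tau>. g (xs \<tau>)) ` {-t..s}))) ` {-t..0})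
          | u xs. admissible_control U t u \<and> trajectory f x t u xs}"

definition H_hat ::
  "nat \<Rightarrow> (nat \<Rightarrow> 'a::euclidean_space) \<Rightarrow> (nat \<Rightarrow> 'a) \<Rightarrow> ('a \<Rightarrow> 'a \<Rightarrow> 'a set) \<Rightarrow> 'a \<Rightarrow> 'a \<Rightarrow> real" where
  "H_hat N xd vd E x p =
     Max ((\<lambda>i. Inf ((\<lambda>w. p \<bullet> w) ` {vd i + e | e. e \<in> E x (xd i)})) ` {1..N})"

text \<open>Left-hand operators of the variational inequalities, written exactly as in the paper:
  argument r stands for the value V(x,t), q for D_t V(x,t), p for D_x V(x,t);
  the equation is 0 = F x t r q p.\<close>
definition F_avoid :: "('a \<Rightarrow> real) \<Rightarrow> ('a \<Rightarrow> 'a \<Rightarrow> real) \<Rightarrow> 'a \<Rightarrow> real \<Rightarrow> real \<Rightarrow> real \<Rightarrow> 'a \<Rightarrow> real" where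
  "F_avoid g H x t r q p = min (g x - r) (- q + H x p)"

definition F_reach_avoid ::
  "('a \<Rightarrow> real) \<Rightarrow> ('a \<Rightarrow> real) \<Rightarrow> ('a \<Rightarrow> 'a \<Rightarrow> real) \<Rightarrow> 'a \<Rightarrow> real \<Rightarrow> real \<Rightarrow> real \<Rightarrow> 'a \<Rightarrow> real" where
  "F_reach_avoid l g H x t r q p = min (g x - r) (max (l x - r) (- q + H x p))"

definition C1_test ::
  "('a::euclidean_space \<Rightarrow> real \<Rightarrow> real) \<Rightarrow> ('a \<Rightarrow> real \<Rightarrow> 'a) \<Rightarrow> ('a \<Rightarrow> real \<Rightarrow> real) \<Rightarrow> bool" where
  "C1_test phi phix phit \<longleftrightarrow>
     (\<forall>x t. t > 0 \<longrightarrow>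
        ((\<lambda>z. phi (fst z) (snd z)) has_derivative (\<lambda>h. phix x t \<bullet> fst h + phit x t * snd h)) (at (x, t))) \<and>
     continuous_on (UNIV \<times> {0<..}) (\<lambda>z. phix (fst z) (snd z)) \<and>
     continuous_on (UNIV \<times> {0<..}) (\<lambda>z. phit (fst z) (snd z))"

definition local_max_at :: "('a::euclidean_space \<Rightarrow> real \<Rightarrow> real) \<Rightarrow> 'a \<Rightarrow> real \<Rightarrow> bool" where
  "local_max_at w x0 t0 \<longleftrightarrow>
     (\<exists>e>0. \<forall>y s. s > 0 \<and> dist (y, s) (x0, t0) < e \<longrightarrow> w y s \<le> w x0 t0)"

definition local_min_at :: "('a::euclidean_space \<Rightarrow> real \<Rightarrow> real) \<Rightarrow> 'a \<Rightarrow> real \<Rightarrow> bool" where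
  "local_min_at w x0 t0 \<longleftrightarrow>
     (\<exists>e>0. \<forall>y s. s > 0 \<and> dist (y, s) (x0, t0) < e \<longrightarrow> w x0 t0 \<le> w y s)"

text \<open>Since F (as written in the paper) is nonincreasing in r, the standard
  Crandall-Evans-Lions convention applied to the proper operator -F gives:
  subsolution: F >= 0 at local maxima of W - phi; supersolution: F <= 0 at local minima.\<close>
definition visc_subsolution ::
  "('a::euclidean_space \<Rightarrow> real \<Rightarrow> real \<Rightarrow> real \<Rightarrow> 'a \<Rightarrow> real) \<Rightarrow> ('a \<Rightarrow> real \<Rightarrow> real) \<Rightarrow> bool" where
  "visc_subsolution F W \<longleftrightarrow>
     (\<forall>phi phix phit x0 t0. C1_test phi phix phit \<and> t0 > 0 \<and>
        local_max_at (\<lambda>y s. W y s - phi y s) x0 t0 \<longrightarrow>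
        F x0 t0 (W x0 t0) (phit x0 t0) (phix x0 t0) \<ge> 0)"

definition visc_supersolution ::
  "('a::euclidean_space \<Rightarrow> real \<Rightarrow> real \<Rightarrow> real \<Rightarrow> 'a \<Rightarrow> real) \<Rightarrow> ('a \<Rightarrow> real \<Rightarrow> real) \<Rightarrow> bool" where
  "visc_supersolution F W \<longleftrightarrow>
     (\<forall>phi phix phit x0 t0. C1_test phi phix phit \<and> t0 > 0 \<and>
        local_min_at (\<lambda>y s. W y s - phi y s) x0 t0 \<longrightarrow>
        F x0 t0 (W x0 t0) (phit x0 t0) (phix x0 t0) \<le> 0)"

definition visc_solution ::
  "('a::euclidean_space \<Rightarrow> real \<Rightarrow> real \<Rightarrow> real \<Rightarrow> 'a \<Rightarrow> real) \<Rightarrow> ('a \<Rightarrow> real) \<Rightarrow> ('a \<Rightarrow> real \<Rightarrow> real) \<Rightarrow> bool" where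
  "visc_solution F W0 W \<longleftrightarrow>
     continuous_on (UNIV \<times> {0..}) (\<lambda>z. W (fst z) (snd z)) \<and>
     visc_subsolution F W \<and> visc_supersolution F W \<and> (\<forall>x. W x 0 = W0 x)"

end

theory Submission
  imports Defs
begin

lemma traj_cont:
  fixes h :: "real \<Rightarrow> 'a::euclidean_space"
  assumes I: "\<forall>s\<in>{a..b}. (h has_integral (w s - x0)) {a..s}" and ab: "a \<le> b"
  shows "continuous_on {a..b} w"
proof -
  have hi: "h integrable_on {a..b}" using I ab by auto
  have "continuous_on {a..b} (\<lambda>s. x0 + integral {a..s} h)"
    by (intro continuous_intros indefinite_integral_continuous_1 hi)
  moreover have "x0 + integral {a..s} h = w s" if "s \<in> {a..b}" for s
  proof -
    have "integral {a..s} h = w s - x0" using I that by (simp add: integral_unique)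
    then show ?thesis by simp
  qed
  ultimately show ?thesis by (rule continuous_on_eq)
qed

lemma traj_short_bound:
  fixes F :: "'a::euclidean_space \<Rightarrow> 'a"
  assumes lip: "L-lipschitz_on UNIV F"
    and I: "\<forall>s\<in>{a..b}. ((\<lambda>\<tau>. F (w \<tau>)) has_integral (w s - y)) {a..s}"
    and ab: "a \<le> b" and small: "L * (b - a) \<le> 1/2"
    and s: "s \<in> {a..b}"
  shows "norm (w s - y) \<le> 2 * norm (F y) * (s - a)"
proof -
  have L0: "L \<ge> 0" using lip by (simp add: lipschitz_on_def)
  have cw: "continuous_on {a..s} w"
    using traj_cont[OF _ ab, of "\<lambda>\<tau>. F (w \<tau>)" w y] I continuous_on_subset s by force
  have "continuous_on {a..s} (\<lambda>\<tau>. norm (w \<tau> - y))"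
    by (intro continuous_intros cw)
  then obtain t where t: "t \<in> {a..s}" and tm: "\<forall>\<tau>\<in>{a..s}. norm (w \<tau> - y) \<le> norm (w t - y)"
    using continuous_attains_sup[of "{a..s}" "\<lambda>\<tau>. norm (w \<tau> - y)"] s by auto
  define m where "m = norm (w t - y)"
  have m0: "m \<ge> 0" by (simp add: m_def)
  have "norm (w t - y) \<le> (norm (F y) + L * m) * Henstock_Kurzweil_Integration.content (cbox a t)"
  proof (rule has_integral_bound[where f="\<lambda>\<tau>. F (w \<tau>)"])
    show "0 \<le> norm (F y) + L * m" using L0 m0 by simp
    show "((\<lambda>\<tau>. F (w \<tau>)) has_integral w t - y) (cbox a t)" using I t s by auto
    fix x assume x: "x \<in> cbox a t"
    have "norm (F (w x)) \<le> norm (F y) + norm (F (w x) - F y)" by (metis norm_triangle_sub add.commute)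
    also have "norm (F (w x) - F y) \<le> L * norm (w x - y)"
      using lip by (simp add: lipschitz_on_def dist_norm)
    also have "L * norm (w x - y) \<le> L * m"
      using tm x t by (intro mult_left_mono L0) (auto simp: m_def)
    finally show "norm (F (w x)) \<le> norm (F y) + L * m" by simp
  qed
  also have "Henstock_Kurzweil_Integration.content (cbox a t) = t - a" using t by simp
  finally have "m \<le> (norm (F y) + L * m) * (t - a)" by (simp add: m_def)
  also have "\<dots> \<le> (norm (F y) + L * m) * (s - a)"
    using t L0 m0 by (intro mult_left_mono) auto
  also have "\<dots> = norm (F y) * (s - a) + m * (L * (s - a))" by (simp add: algebra_simps)
  also have "m * (L * (s - a)) \<le> m * (1/2)"
  proof -
    have "L * (s - a) \<le> L * (b - a)" using s L0 by (intro mult_left_mono) auto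
    then show ?thesis using small m0 by (intro mult_left_mono) auto
  qed
  finally have "m \<le> 2 * norm (F y) * (s - a)" by simp
  moreover have "norm (w s - y) \<le> m" using tm s by (auto simp: m_def)
  ultimately show ?thesis by simp
qed

lemma traj_short_taylor:
  fixes F :: "'a::euclidean_space \<Rightarrow> 'a"
  assumes lip: "L-lipschitz_on UNIV F"
    and I: "\<forall>s\<in>{a..b}. ((\<lambda>\<tau>. F (w \<tau>)) has_integral (w s - y)) {a..s}"
    and ab: "a \<le> b" and small: "L * (b - a) \<le> 1/2"
    and s: "s \<in> {a..b}"
  shows "norm (w s - y - (s - a) *\<^sub>R F y) \<le> 2 * L * norm (F y) * (s - a)^2"
proof -
  have L0: "L \<ge> 0" using lip by (simp add: lipschitz_on_def)
  have c: "((\<lambda>\<tau>. F y) has_integral (s - a) *\<^sub>R F y) {a..s}"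
    using has_integral_const_real[of "F y" a s] s by simp
  have "((\<lambda>\<tau>. F (w \<tau>) - F y) has_integral (w s - y - (s - a) *\<^sub>R F y)) {a..s}"
    using I s c by (intro has_integral_diff) auto
  then have hi: "((\<lambda>\<tau>. F (w \<tau>) - F y) has_integral (w s - y - (s - a) *\<^sub>R F y)) (cbox a s)"
    using s by simp
  have "norm (w s - y - (s - a) *\<^sub>R F y) \<le> (2 * L * norm (F y) * (s - a)) * Henstock_Kurzweil_Integration.content (cbox a s)"
  proof (rule has_integral_bound[OF _ hi])
    show "0 \<le> 2 * L * norm (F y) * (s - a)" using L0 s by simp
    fix x assume x: "x \<in> cbox a s"
    have "norm (F (w x) - F y) \<le> L * norm (w x - y)"
      using lip by (simp add: lipschitz_on_def dist_norm)
    also have "norm (w x - y) \<le> 2 * norm (F y) * (x - a)"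
      using traj_short_bound[OF lip I ab small] x s by auto
    also have "2 * norm (F y) * (x - a) \<le> 2 * norm (F y) * (s - a)" using x by (intro mult_left_mono) auto
    finally show "norm (F (w x) - F y) \<le> 2 * L * norm (F y) * (s - a)"
      using L0 by (simp add: mult_left_mono mult.assoc)
  qed
  also have "Henstock_Kurzweil_Integration.content (cbox a s) = s - a" using s by simp
  finally show ?thesis by (simp add: power2_eq_square mult.assoc)
qed

lemma half_pow_small:
  fixes C e :: real
  assumes "e > 0" "C \<ge> 0"
  shows "\<exists>k. C * (1/2)^k < e"
proof -
  obtain k where "(1/2::real)^k < e / (C + 1)"
    using real_arch_pow_inv[of "e/(C+1)" "1/2"] assms by auto
  then have "(C + 1) * (1/2)^k < e" using assms by (simp add: field_simps)
  moreover have "C * (1/2::real)^k \<le> (C + 1) * (1/2)^k" by (simp add: mult_right_mono)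
  ultimately show ?thesis by (meson le_less_trans)
qed

lemma picard_short:
  fixes F :: "'a::euclidean_space \<Rightarrow> 'a"
  assumes lip: "L-lipschitz_on UNIV F" and ab: "a \<le> b" and small: "L * (b - a) \<le> 1/2"
  shows "\<exists>w. w a = x0 \<and> (\<forall>s\<in>{a..b}. ((\<lambda>\<tau>. F (w \<tau>)) has_integral (w s - x0)) {a..s})"
proof -
  have L0: "L \<ge> 0" using lip by (simp add: lipschitz_on_def)
  have Fc: "continuous_on UNIV F" using lipschitz_on_continuous_on[OF lip] .
  have Fl: "norm (F p - F q) \<le> L * norm (p - q)" for p q
    using lip by (simp add: lipschitz_on_def dist_norm)
  define P where "P = rec_nat (\<lambda>s. x0) (\<lambda>k p s. x0 + integral {a..s} (\<lambda>\<tau>. F (p \<tau>)))"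
  have P0: "P 0 = (\<lambda>s. x0)" by (simp add: P_def)
  have PS: "P (Suc k) = (\<lambda>s. x0 + integral {a..s} (\<lambda>\<tau>. F (P k \<tau>)))" for k by (simp add: P_def)
  have cont: "continuous_on {a..b} (P k)" for k
  proof (induction k)
    case 0 then show ?case by (simp add: P0)
  next
    case (Suc k)
    have "continuous_on {a..b} (\<lambda>\<tau>. F (P k \<tau>))"
      using continuous_on_compose2[OF Fc Suc] by auto
    then have "(\<lambda>\<tau>. F (P k \<tau>)) integrable_on {a..b}" by (rule integrable_continuous_interval)
    then show ?case unfolding PS by (intro continuous_intros indefinite_integral_continuous_1)
  qed
  have intg: "(\<lambda>\<tau>. F (P k \<tau>)) integrable_on {a..s}" if "s \<in> {a..b}" for k s
  proof -
    have "continuous_on {a..s} (P k)" by (rule continuous_on_subset[OF cont]) (use that in auto)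
    then have "continuous_on {a..s} (\<lambda>\<tau>. F (P k \<tau>))"
      by (rule continuous_on_compose2[OF Fc]) auto
    then show ?thesis by (rule integrable_continuous_interval)
  qed
  define D where "D = norm (F x0) * (b - a)"
  have D0: "D \<ge> 0" using ab by (simp add: D_def)
  have step: "\<forall>s\<in>{a..b}. norm (P (Suc k) s - P k s) \<le> D * (1/2)^k" for k
  proof (induction k)
    case 0
    show ?case
    proof
      fix s assume s: "s \<in> {a..b}"
      have "integral {a..s} (\<lambda>\<tau>. F x0) = (s - a) *\<^sub>R F x0" using s by simp
      then have "norm (P (Suc 0) s - P 0 s) = (s - a) * norm (F x0)" using s by (simp add: PS P0)
      also have "\<dots> \<le> D" using s by (simp add: D_def mult_right_mono mult.commute)
      finally show "norm (P (Suc 0) s - P 0 s) \<le> D * (1/2)^0" by simp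
    qed
  next
    case (Suc k)
    show ?case
    proof
      fix s assume s: "s \<in> {a..b}"
      have "P (Suc (Suc k)) s - P (Suc k) s
          = integral {a..s} (\<lambda>\<tau>. F (P (Suc k) \<tau>) - F (P k \<tau>))"
      proof -
        have e1: "P (Suc (Suc k)) s = x0 + integral {a..s} (\<lambda>\<tau>. F (P (Suc k) \<tau>))"
          by (simp only: PS[of "Suc k"])
        have e2: "P (Suc k) s = x0 + integral {a..s} (\<lambda>\<tau>. F (P k \<tau>))"
          by (simp only: PS[of k])
        show ?thesis unfolding e1 e2 using integral_diff[OF intg[OF s, of "Suc k"] intg[OF s, of k]] by simp
      qed
      moreover have "((\<lambda>\<tau>. F (P (Suc k) \<tau>) - F (P k \<tau>)) has_integral
            integral {a..s} (\<lambda>\<tau>. F (P (Suc k) \<tau>) - F (P k \<tau>))) (cbox a s)"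
        using s intg by (auto intro!: integrable_integral integrable_diff)
      then have "norm (integral {a..s} (\<lambda>\<tau>. F (P (Suc k) \<tau>) - F (P k \<tau>)))
           \<le> (L * (D * (1/2)^k)) * Henstock_Kurzweil_Integration.content (cbox a s)"
      proof (rule has_integral_bound[rotated])
        show "0 \<le> L * (D * (1/2)^k)" using L0 D0 by simp
        fix x assume x: "x \<in> cbox a s"
        have "norm (F (P (Suc k) x) - F (P k x)) \<le> L * norm (P (Suc k) x - P k x)" by (rule Fl)
        also have "\<dots> \<le> L * (D * (1/2)^k)"
          using Suc x s by (intro mult_left_mono L0) auto
        finally show "norm (F (P (Suc k) x) - F (P k x)) \<le> L * (D * (1/2)^k)" .
      qed
      moreover have "Henstock_Kurzweil_Integration.content (cbox a s) = s - a" using s by simp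
      moreover have "L * (D * (1/2)^k) * (s - a) \<le> D * (1/2)^Suc k"
      proof -
        have "L * (s - a) \<le> 1/2"
          using s L0 small by (meson atLeastAtMost_iff diff_right_mono mult_left_mono order.trans)
        then have "(D * (1/2)^k) * (L * (s - a)) \<le> (D * (1/2)^k) * (1/2)"
          using D0 by (intro mult_left_mono) auto
        then show ?thesis by (simp add: algebra_simps)
      qed
      ultimately show "norm (P (Suc (Suc k)) s - P (Suc k) s) \<le> D * (1/2)^Suc k" by simp
    qed
  qed
  have far: "norm (P (k + j) s - P k s) \<le> 2 * D * (1/2)^k * (1 - (1/2)^j)"
    if s: "s \<in> {a..b}" for k j s
  proof (induction j)
    case 0 then show ?case by simp
  next
    case (Suc j)
    have "norm (P (k + Suc j) s - P k s) \<le> norm (P (Suc (k + j)) s - P (k + j) s) + norm (P (k + j) s - P k s)"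
      using norm_triangle_ineq[of "P (Suc (k + j)) s - P (k + j) s" "P (k + j) s - P k s"] by simp
    also have "\<dots> \<le> D * (1/2)^(k+j) + 2 * D * (1/2)^k * (1 - (1/2)^j)"
      using step s Suc by (intro add_mono) auto
    also have "\<dots> = 2 * D * (1/2)^k * (1 - (1/2)^Suc j)"
      by (simp add: power_add algebra_simps)
    finally show ?case .
  qed
  have far2: "norm (P m s - P k s) \<le> 2 * D * (1/2)^k" if s: "s \<in> {a..b}" and "k \<le> m" for k m s
  proof -
    obtain j where m: "m = k + j" using \<open>k \<le> m\<close> le_Suc_ex by blast
    have "2 * D * (1/2)^k * (1 - (1/2)^j) \<le> 2 * D * (1/2::real)^k"
      using D0 by (simp add: mult_left_mono)
    then show ?thesis using far[OF s, of k j] m by simp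
  qed
  have conv: "convergent (\<lambda>k. P k s)" if s: "s \<in> {a..b}" for s
  proof -
    have "Cauchy (\<lambda>k. P k s)"
    proof (rule CauchyI)
      fix e :: real assume e: "e > 0"
      obtain M where M: "4 * D * (1/2)^M < e" using half_pow_small[of e "4*D"] e D0 by auto
      show "\<exists>M. \<forall>m\<ge>M. \<forall>n\<ge>M. norm (P m s - P n s) < e"
      proof (intro exI allI impI)
        fix m n assume "M \<le> m" "M \<le> n"
        have "norm (P m s - P n s) \<le> norm (P m s - P M s) + norm (P n s - P M s)"
          using norm_triangle_ineq4[of "P m s - P M s" "P n s - P M s"] by simp
        also have "\<dots> \<le> 2 * D * (1/2)^M + 2 * D * (1/2)^M"
          using far2[OF s \<open>M \<le> m\<close>] far2[OF s \<open>M \<le> n\<close>] by (rule add_mono)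
        finally show "norm (P m s - P n s) < e" using M by simp
      qed
    qed
    then show ?thesis by (simp add: Cauchy_convergent_iff)
  qed
  define w where "w s = lim (\<lambda>k. P k s)" for s
  have lim: "(\<lambda>k. P k s) \<longlonglongrightarrow> w s" if "s \<in> {a..b}" for s
    using conv[OF that] by (simp add: w_def convergent_LIMSEQ_iff)
  have wbound: "norm (w s - P k s) \<le> 2 * D * (1/2)^k" if s: "s \<in> {a..b}" for s k
  proof (rule tendsto_upperbound)
    show "(\<lambda>m. norm (P m s - P k s)) \<longlonglongrightarrow> norm (w s - P k s)"
      by (intro tendsto_intros lim s)
    show "\<forall>\<^sub>F m in sequentially. norm (P m s - P k s) \<le> 2 * D * (1/2)^k"
      using eventually_ge_at_top[of k] by (rule eventually_mono) (rule far2[OF s])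
  qed simp
  have Pa: "P k a = x0" for k by (cases k) (auto simp: P0 PS)
  have wa: "w a = x0"
  proof -
    have "(\<lambda>k. P k a) \<longlonglongrightarrow> x0" by (simp add: Pa)
    then show ?thesis using lim[of a] ab LIMSEQ_unique by auto
  qed
  have main: "((\<lambda>\<tau>. F (w \<tau>)) has_integral (w s - x0)) {a..s}" if s: "s \<in> {a..b}" for s
  proof -
    have sub: "\<tau> \<in> {a..b}" if "\<tau> \<in> {a..s}" for \<tau> using that s by auto
    have wi: "(\<lambda>\<tau>. F (w \<tau>)) integrable_on cbox a s"
    proof (rule integrable_uniform_limit)
      fix e :: real assume e: "e > 0"
      obtain k where k: "L * (2 * D) * (1/2)^k < e" using half_pow_small[of e "L * (2*D)"] e D0 L0 by auto
      show "\<exists>g. (\<forall>x\<in>cbox a s. norm (F (w x) - g x) \<le> e) \<and> g integrable_on cbox a s"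
      proof (intro exI conjI ballI)
        show "(\<lambda>\<tau>. F (P k \<tau>)) integrable_on cbox a s" using intg s by simp
        fix x assume x: "x \<in> cbox a s"
        have "norm (F (w x) - F (P k x)) \<le> L * norm (w x - P k x)" by (rule Fl)
        also have "\<dots> \<le> L * (2 * D * (1/2)^k)" using wbound sub x L0 by (intro mult_left_mono) auto
        finally show "norm (F (w x) - F (P k x)) \<le> e" using k by (simp add: mult.assoc)
      qed
    qed
    have t1: "(\<lambda>k. integral {a..s} (\<lambda>\<tau>. F (P k \<tau>))) \<longlonglongrightarrow> integral {a..s} (\<lambda>\<tau>. F (w \<tau>))"
    proof (rule LIMSEQ_I)
      fix e :: real assume e: "e > 0"
      obtain M where M: "(L * (2 * D) * (b - a) + 1) * (1/2)^M < e"
        using half_pow_small[of e "L * (2*D) * (b-a) + 1"] e D0 L0 ab by auto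
      show "\<exists>M. \<forall>k\<ge>M. norm (integral {a..s} (\<lambda>\<tau>. F (P k \<tau>)) - integral {a..s} (\<lambda>\<tau>. F (w \<tau>))) < e"
      proof (intro exI allI impI)
        fix k assume kM: "M \<le> k"
        have "integral {a..s} (\<lambda>\<tau>. F (P k \<tau>)) - integral {a..s} (\<lambda>\<tau>. F (w \<tau>))
            = integral {a..s} (\<lambda>\<tau>. F (P k \<tau>) - F (w \<tau>))"
          using intg s wi by (simp add: integral_diff)
        moreover have "((\<lambda>\<tau>. F (P k \<tau>) - F (w \<tau>)) has_integral
            integral {a..s} (\<lambda>\<tau>. F (P k \<tau>) - F (w \<tau>))) (cbox a s)"
          using s intg wi by (auto intro!: integrable_integral integrable_diff)
        then have "norm (integral {a..s} (\<lambda>\<tau>. F (P k \<tau>) - F (w \<tau>)))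
             \<le> (L * (2 * D * (1/2)^k)) * Henstock_Kurzweil_Integration.content (cbox a s)"
        proof (rule has_integral_bound[rotated])
          show "0 \<le> L * (2 * D * (1/2)^k)" using L0 D0 by simp
          fix x assume x: "x \<in> cbox a s"
          have "norm (F (P k x) - F (w x)) \<le> L * norm (P k x - w x)" by (rule Fl)
          also have "\<dots> \<le> L * (2 * D * (1/2)^k)"
            using wbound sub x L0 by (intro mult_left_mono) (auto simp: norm_minus_commute)
          finally show "norm (F (P k x) - F (w x)) \<le> L * (2 * D * (1/2)^k)" .
        qed
        moreover have "Henstock_Kurzweil_Integration.content (cbox a s) = s - a" using s by simp
        ultimately have X: "norm (integral {a..s} (\<lambda>\<tau>. F (P k \<tau>)) - integral {a..s} (\<lambda>\<tau>. F (w \<tau>)))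
             \<le> (L * (2 * D * (1/2)^k)) * (s - a)" by simp
        have Y: "(L * (2 * D * (1/2)^k)) * (s - a) \<le> (L * (2 * D * (1/2)^k)) * (b - a)"
          using s L0 D0 by (intro mult_left_mono) auto
        have Z: "(L * (2 * D * (1/2)^k)) * (b - a) \<le> (L * (2 * D) * (b - a) + 1) * (1/2)^M"
        proof -
          have "(1/2::real)^k \<le> (1/2)^M" using kM by (simp add: power_decreasing)
          then have "(L * (2 * D) * (b - a)) * (1/2)^k \<le> (L * (2 * D) * (b - a)) * (1/2)^M"
            using L0 D0 ab by (intro mult_left_mono) auto
          also have "\<dots> \<le> (L * (2 * D) * (b - a) + 1) * (1/2)^M" by (simp add: mult_right_mono)
          finally show ?thesis by (simp add: algebra_simps)
        qed
        show "norm (integral {a..s} (\<lambda>\<tau>. F (P k \<tau>)) - integral {a..s} (\<lambda>\<tau>. F (w \<tau>))) < e"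
          using X Y Z M by linarith
      qed
    qed
    have t2: "(\<lambda>k. integral {a..s} (\<lambda>\<tau>. F (P k \<tau>))) \<longlonglongrightarrow> w s - x0"
    proof -
      have "(\<lambda>k. P (Suc k) s - x0) \<longlonglongrightarrow> w s - x0"
        using LIMSEQ_Suc[OF lim[OF s]] by (intro tendsto_intros)
      then show ?thesis by (simp add: PS)
    qed
    have "integral {a..s} (\<lambda>\<tau>. F (w \<tau>)) = w s - x0" using LIMSEQ_unique[OF t1 t2] .
    then show ?thesis using wi by (metis box_real(2) integrable_integral)
  qed
  show ?thesis using wa main by blast
qed

lemma glue_auto:
  fixes F :: "'a::euclidean_space \<Rightarrow> 'a" and a b c :: real
  assumes I1: "\<forall>s\<in>{a..b}. ((\<lambda>\<tau>. F (w1 \<tau>)) has_integral (w1 s - x0)) {a..s}"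
    and I2: "\<forall>s\<in>{b..c}. ((\<lambda>\<tau>. F (w2 \<tau>)) has_integral (w2 s - w1 b)) {b..s}"
    and e: "w2 b = w1 b" and ab: "a \<le> b" and bc: "b \<le> c"
  shows "\<forall>s\<in>{a..c}. ((\<lambda>\<tau>. F (if \<tau> \<le> b then w1 \<tau> else w2 \<tau>)) has_integral
            ((if s \<le> b then w1 s else w2 s) - x0)) {a..s}"
proof
  fix s assume s: "s \<in> {a..c}"
  show "((\<lambda>\<tau>. F (if \<tau> \<le> b then w1 \<tau> else w2 \<tau>)) has_integral
            ((if s \<le> b then w1 s else w2 s) - x0)) {a..s}"
  proof (cases "s \<le> b")
    case True
    have h: "((\<lambda>\<tau>. F (w1 \<tau>)) has_integral (w1 s - x0)) {a..s}" using I1 s True by auto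
    have "\<And>x. x \<in> {a..s} \<Longrightarrow> F (w1 x) = F (if x \<le> b then w1 x else w2 x)"
      using True by auto
    from has_integral_eq[OF this h] show ?thesis using True by simp
  next
    case False
    have h1': "((\<lambda>\<tau>. F (w1 \<tau>)) has_integral (w1 b - x0)) {a..b}" using I1 ab by auto
    have "\<And>x. x \<in> {a..b} \<Longrightarrow> F (w1 x) = F (if x \<le> b then w1 x else w2 x)" by auto
    from has_integral_eq[OF this h1']
    have h1: "((\<lambda>\<tau>. F (if \<tau> \<le> b then w1 \<tau> else w2 \<tau>)) has_integral (w1 b - x0)) {a..b}" .
    have h2': "((\<lambda>\<tau>. F (w2 \<tau>)) has_integral (w2 s - w1 b)) {b..s}" using I2 s False by auto
    have "\<And>x. x \<in> {b..s} \<Longrightarrow> F (w2 x) = F (if x \<le> b then w1 x else w2 x)" using e by auto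
    from has_integral_eq[OF this h2']
    have h2: "((\<lambda>\<tau>. F (if \<tau> \<le> b then w1 \<tau> else w2 \<tau>)) has_integral (w2 s - w1 b)) {b..s}" .
    have "b \<le> s" using False by simp
    from has_integral_combine[OF ab this h1 h2]
    have "((\<lambda>\<tau>. F (if \<tau> \<le> b then w1 \<tau> else w2 \<tau>)) has_integral (w1 b - x0 + (w2 s - w1 b))) {a..s}" .
    then show ?thesis using False by simp
  qed
qed

lemma picard_global:
  fixes F :: "'a::euclidean_space \<Rightarrow> 'a" and a b :: real
  assumes lip: "L-lipschitz_on UNIV F" and ab: "a \<le> b"
  shows "\<exists>w. w a = x0 \<and> (\<forall>s\<in>{a..b}. ((\<lambda>\<tau>. F (w \<tau>)) has_integral (w s - x0)) {a..s})"
proof -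
  have L0: "L \<ge> 0" using lip by (simp add: lipschitz_on_def)
  define d where "d = 1 / (2 * (L + 1))"
  have d0: "d > 0" using L0 by (simp add: d_def)
  have dL: "L * d \<le> 1/2" using L0 by (simp add: d_def field_simps)
  have ind: "\<exists>w. w a = x0 \<and> (\<forall>s\<in>{a..a + real n * d}. ((\<lambda>\<tau>. F (w \<tau>)) has_integral (w s - x0)) {a..s})" for n
  proof (induction n)
    case 0
    show ?case by (intro exI[of _ "\<lambda>_. x0"]) auto
  next
    case (Suc n)
    then obtain w1 where w1: "w1 a = x0" "\<forall>s\<in>{a..a + real n * d}. ((\<lambda>\<tau>. F (w1 \<tau>)) has_integral (w1 s - x0)) {a..s}"
      by blast
    define m where "m = a + real n * d"
    have mS: "a + real (Suc n) * d = m + d" by (simp add: m_def algebra_simps)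
    have am: "a \<le> m" using d0 by (simp add: m_def)
    have "L * ((m + d) - m) \<le> 1/2" using dL by simp
    then obtain w2 where w2a: "w2 m = w1 m"
      and w2b: "\<forall>s\<in>{m..m + d}. ((\<lambda>\<tau>. F (w2 \<tau>)) has_integral (w2 s - w1 m)) {m..s}"
      using picard_short[OF lip, of m "m + d" "w1 m"] d0 by auto
    have w1b: "\<forall>s\<in>{a..m}. ((\<lambda>\<tau>. F (w1 \<tau>)) has_integral (w1 s - x0)) {a..s}"
      using w1(2) by (simp add: m_def)
    have g: "\<forall>s\<in>{a..m + d}. ((\<lambda>\<tau>. F (if \<tau> \<le> m then w1 \<tau> else w2 \<tau>)) has_integral
            ((if s \<le> m then w1 s else w2 s) - x0)) {a..s}"
      by (rule glue_auto[OF w1b w2b w2a am]) (use d0 in simp)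
    show ?case unfolding mS
      by (rule exI[of _ "\<lambda>s. if s \<le> m then w1 s else w2 s"]) (use g w1(1) am in simp)
  qed
  obtain n where n: "(b - a) / d < real n" using reals_Archimedean2 by blast
  then have "b \<le> a + real n * d" using d0 by (simp add: field_simps)
  then have sub: "{a..b} \<subseteq> {a..a + real n * d}" by auto
  obtain w where "w a = x0" "\<forall>s\<in>{a..a + real n * d}. ((\<lambda>\<tau>. F (w \<tau>)) has_integral (w s - x0)) {a..s}"
    using ind[of n] by blast
  then show ?thesis using sub by blast
qed

lemma lebesgue_on_restrict2:
  fixes a b c :: real
  assumes "a \<le> b"
  shows "restrict_space (lebesgue_on {a..c}) {x. \<not> x < b} = lebesgue_on {b..c}"
proof -
  have "restrict_space (lebesgue_on {a..c}) {x. \<not> x < b} = lebesgue_on ({a..c} \<inter> {x. \<not> x < b})"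
    by (rule restrict_restrict_space) auto
  also have "{a..c} \<inter> {x. \<not> x < b} = {b..c}" using assms by auto
  finally show ?thesis .
qed

lemma admissible_glue:
  fixes u' :: "real \<Rightarrow> 'u::euclidean_space"
  assumes c: "c \<in> U" and ab: "a \<le> b" and b0: "b \<le> 0"
    and adm: "admissible_control U (- b) u'"
  shows "admissible_control U (- a) (\<lambda>\<tau>. if \<tau> < b then c else u' \<tau>)"
proof -
  have m: "u' \<in> borel_measurable (lebesgue_on {b..0})" and uU: "\<forall>s\<in>{b..0}. u' s \<in> U"
    using adm by (auto simp: admissible_control_def)
  have "(\<lambda>\<tau>. if \<tau> < b then c else u' \<tau>) \<in> borel_measurable (lebesgue_on {a..0})"
  proof (subst measurable_If_restrict_space_iff)
    show "{x \<in> space (lebesgue_on {a..0}). x < b} \<in> sets (lebesgue_on {a..0})"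
      by (auto simp: sets_restrict_space_iff space_restrict_space)
    show "(\<lambda>x. c) \<in> borel_measurable (restrict_space (lebesgue_on {a..0}) {x. x < b}) \<and>
          u' \<in> borel_measurable (restrict_space (lebesgue_on {a..0}) {x. \<not> x < b})"
      using m by (simp add: lebesgue_on_restrict2[OF ab])
  qed
  moreover have "\<forall>s\<in>{a..0}. (if s < b then c else u' s) \<in> U" using c uU by auto
  ultimately show ?thesis by (simp add: admissible_control_def)
qed

lemma trajectory_glue:
  fixes f :: "'a::euclidean_space \<Rightarrow> 'u::euclidean_space \<Rightarrow> 'a"
  assumes I1: "\<forall>s\<in>{a..b}. ((\<lambda>\<tau>. f (w \<tau>) c) has_integral (w s - x)) {a..s}"
    and wa: "w a = x"
    and tr: "trajectory f (w b) (- b) u' v"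
    and ab: "a \<le> b" and b0: "b \<le> 0"
  shows "trajectory f x (- a) (\<lambda>\<tau>. if \<tau> < b then c else u' \<tau>) (\<lambda>s. if s \<le> b then w s else v s)"
proof -
  have vb: "v b = w b" and I2: "\<forall>s\<in>{b..0}. ((\<lambda>\<tau>. f (v \<tau>) (u' \<tau>)) has_integral (v s - w b)) {b..s}"
    using tr by (auto simp: trajectory_def)
  let ?G = "\<lambda>s. if s \<le> b then w s else v s"
  let ?u = "\<lambda>\<tau>. if \<tau> < b then c else u' \<tau>"
  have "((\<lambda>\<tau>. f (?G \<tau>) (?u \<tau>)) has_integral (?G s - x)) {a..s}" if s: "s \<in> {a..0}" for s
  proof (cases "s \<le> b")
    case True
    have h: "((\<lambda>\<tau>. f (w \<tau>) c) has_integral (w s - x)) {a..s}" using I1 s True by auto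
    have "\<And>\<tau>. \<tau> \<in> {a..s} - {b} \<Longrightarrow> f (?G \<tau>) (?u \<tau>) = f (w \<tau>) c" using True by auto
    from has_integral_spike_finite[where S="{b}", OF _ this h] show ?thesis using True by simp
  next
    case False
    have h1': "((\<lambda>\<tau>. f (w \<tau>) c) has_integral (w b - x)) {a..b}" using I1 ab by auto
    have "\<And>\<tau>. \<tau> \<in> {a..b} - {b} \<Longrightarrow> f (?G \<tau>) (?u \<tau>) = f (w \<tau>) c" by auto
    from has_integral_spike_finite[where S="{b}", OF _ this h1']
    have h1: "((\<lambda>\<tau>. f (?G \<tau>) (?u \<tau>)) has_integral (w b - x)) {a..b}" by simp
    have h2': "((\<lambda>\<tau>. f (v \<tau>) (u' \<tau>)) has_integral (v s - w b)) {b..s}" using I2 s False by auto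
    have "\<And>\<tau>. \<tau> \<in> {b..s} \<Longrightarrow> f (v \<tau>) (u' \<tau>) = f (?G \<tau>) (?u \<tau>)" using vb by auto
    from has_integral_eq[OF this h2']
    have h2: "((\<lambda>\<tau>. f (?G \<tau>) (?u \<tau>)) has_integral (v s - w b)) {b..s}" .
    have "b \<le> s" using False by simp
    from has_integral_combine[OF ab this h1 h2]
    have "((\<lambda>\<tau>. f (?G \<tau>) (?u \<tau>)) has_integral (w b - x + (v s - w b))) {a..s}" .
    then show ?thesis using False by simp
  qed
  moreover have "?G a = x" using wa ab by simp
  ultimately show ?thesis unfolding trajectory_def minus_minus by blast
qed

lemma trajectory_cont:
  assumes "trajectory f x t u xs" "t \<ge> 0"
  shows "continuous_on {-t..0} xs"
  using assms traj_cont[of "-t" 0 "\<lambda>\<tau>. f (xs \<tau>) (u \<tau>)" xs x] by (auto simp: trajectory_def)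

lemma const_trajectory_exists:
  fixes f :: "'a::euclidean_space \<Rightarrow> 'u::euclidean_space \<Rightarrow> 'a"
  assumes lip: "L-lipschitz_on UNIV (\<lambda>x. f x c)" and c: "c \<in> U" and t: "t \<ge> 0"
  shows "\<exists>xs. admissible_control U t (\<lambda>_. c) \<and> trajectory f x t (\<lambda>_. c) xs"
proof -
  obtain w where "w (-t) = x" "\<forall>s\<in>{-t..0}. ((\<lambda>\<tau>. f (w \<tau>) c) has_integral (w s - x)) {-t..s}"
    using picard_global[OF lip, of "-t" 0 x] t by auto
  moreover have "admissible_control U t (\<lambda>_. c)" using c by (simp add: admissible_control_def)
  ultimately show ?thesis by (auto simp: trajectory_def)
qed

lemma cont_bdd:
  fixes h :: "real \<Rightarrow> real"
  assumes "continuous_on {p..q} h"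
  shows "bdd_below (h ` {p..q})" "bdd_above (h ` {p..q})"
proof -
  have "compact (h ` {p..q})" using compact_continuous_image[OF assms] by simp
  then have "bounded (h ` {p..q})" by (rule compact_imp_bounded)
  then show "bdd_below (h ` {p..q})" "bdd_above (h ` {p..q})"
    by (auto intro: bounded_imp_bdd_below bounded_imp_bdd_above)
qed

lemma min_Sup_le:
  fixes S :: "real set"
  assumes "S \<noteq> {}" "\<forall>p\<in>S. min m p \<le> B"
  shows "min m (Sup S) \<le> B"
proof (cases "m \<le> B")
  case True then show ?thesis by simp
next
  case False
  then have "\<forall>p\<in>S. p \<le> B" using assms(2) by (metis min_le_iff_disj order_trans linear)
  then have "Sup S \<le> B" using assms(1) by (intro cSup_least) auto
  then show ?thesis by simp
qed

lemma inf_piece: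
  fixes g :: "'a \<Rightarrow> real" and a b s :: real
  assumes ab: "a \<le> b" and bs: "b \<le> s"
    and Gw: "\<forall>\<tau>\<in>{a..b}. G \<tau> = w \<tau>" and Gv: "\<forall>\<tau>\<in>{b..s}. G \<tau> = v \<tau>"
    and cw: "continuous_on {a..b} (\<lambda>\<tau>. g (w \<tau>))" and cv: "continuous_on {b..s} (\<lambda>\<tau>. g (v \<tau>))"
  shows "min (Inf ((\<lambda>\<tau>. g (w \<tau>)) ` {a..b})) (Inf ((\<lambda>\<tau>. g (v \<tau>)) ` {b..s}))
         \<le> Inf ((\<lambda>\<tau>. g (G \<tau>)) ` {a..s})"
proof (rule cInf_greatest)
  show "(\<lambda>\<tau>. g (G \<tau>)) ` {a..s} \<noteq> {}" using ab bs by auto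
  fix y assume "y \<in> (\<lambda>\<tau>. g (G \<tau>)) ` {a..s}"
  then obtain \<tau> where \<tau>: "\<tau> \<in> {a..s}" "y = g (G \<tau>)" by auto
  show "min (Inf ((\<lambda>\<tau>. g (w \<tau>)) ` {a..b})) (Inf ((\<lambda>\<tau>. g (v \<tau>)) ` {b..s})) \<le> y"
  proof (cases "\<tau> \<le> b")
    case True
    then have "Inf ((\<lambda>\<tau>. g (w \<tau>)) ` {a..b}) \<le> g (w \<tau>)"
      using \<tau> cont_bdd(1)[OF cw] by (intro cInf_lower) auto
    then show ?thesis using \<tau> True Gw by (simp add: min.coboundedI1)
  next
    case False
    then have "Inf ((\<lambda>\<tau>. g (v \<tau>)) ` {b..s}) \<le> g (v \<tau>)"
      using \<tau> cont_bdd(1)[OF cv] by (intro cInf_lower) auto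
    then show ?thesis using \<tau> False Gv by (simp add: min.coboundedI2)
  qed
qed

definition payA :: "('a \<Rightarrow> real) \<Rightarrow> real \<Rightarrow> (real \<Rightarrow> 'a) \<Rightarrow> real" where
  "payA g t xs = Inf ((\<lambda>s. g (xs s)) ` {-t..0})"

definition payR :: "('a \<Rightarrow> real) \<Rightarrow> ('a \<Rightarrow> real) \<Rightarrow> real \<Rightarrow> (real \<Rightarrow> 'a) \<Rightarrow> real" where
  "payR l g t xs = Sup ((\<lambda>s. min (l (xs s)) (Inf ((\<lambda>\<tau>. g (xs \<tau>)) ` {-t..s}))) ` {-t..0})"

definition Vgen where
  "Vgen P f U x t = Sup {P t xs | u xs. admissible_control U t u \<and> trajectory f x t u xs}"

lemma V_avoid_Vgen: "V_avoid f U g x t = Vgen (payA g) f U x t"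
  by (simp add: V_avoid_def Vgen_def payA_def)

lemma V_reach_avoid_Vgen: "V_reach_avoid f U l g x t = Vgen (payR l g) f U x t"
  by (simp add: V_reach_avoid_def Vgen_def payR_def)

lemma cont_comp_g:
  fixes p q :: real
  assumes "continuous_on UNIV g" "continuous_on {p..q} xs"
  shows "continuous_on {p..q} (\<lambda>\<tau>. g (xs \<tau>))"
  using continuous_on_compose2[OF assms(1) assms(2)] by auto

lemma cont_sub:
  fixes p q p' q' :: real
  assumes "continuous_on {p..q} xs" "p \<le> p'" "q' \<le> q"
  shows "continuous_on {p'..q'} xs"
  using assms by (rule_tac continuous_on_subset) auto

lemma payA_bound:
  fixes t h s :: real and g l :: "'a::topological_space \<Rightarrow> real"
  assumes gc: "continuous_on UNIV g" and t: "t \<ge> 0" and c: "continuous_on {-t..0} xs"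
  shows "payA g t xs \<le> g (xs (-t))"
  unfolding payA_def using t cont_bdd(1)[OF cont_comp_g[OF gc c]] by (intro cInf_lower) auto

lemma payA_zero:
  shows "payA g 0 xs = g (xs 0)"
  by (simp add: payA_def)

lemma payA_glue:
  fixes t h s :: real and g l :: "'a::topological_space \<Rightarrow> real"
  assumes gc: "continuous_on UNIV g" and h: "0 < h" "h \<le> t"
    and cw: "continuous_on {-t..-t+h} w" and cv: "continuous_on {-t+h..0} v"
    and Gw: "\<forall>s\<in>{-t..-t+h}. G s = w s" and Gv: "\<forall>s\<in>{-t+h..0}. G s = v s"
  shows "min (Inf ((\<lambda>\<tau>. g (w \<tau>)) ` {-t..-t+h})) (payA g (t - h) v) \<le> payA g t G"
proof -
  have "min (Inf ((\<lambda>\<tau>. g (w \<tau>)) ` {-t..-t+h})) (Inf ((\<lambda>\<tau>. g (v \<tau>)) ` {-t+h..0}))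
         \<le> Inf ((\<lambda>\<tau>. g (G \<tau>)) ` {-t..0})"
    by (rule inf_piece[OF _ _ Gw Gv cont_comp_g[OF gc cw] cont_comp_g[OF gc cv]]) (use h in auto)
  then show ?thesis by (simp add: payA_def)
qed

lemma payR_elem_le:
  fixes t h s :: real and g l :: "'a::topological_space \<Rightarrow> real"
  assumes gc: "continuous_on UNIV g" and c: "continuous_on {-t..0} xs" and s: "s \<in> {-t..0}"
  shows "min (l (xs s)) (Inf ((\<lambda>\<tau>. g (xs \<tau>)) ` {-t..s})) \<le> g (xs (-t))"
proof -
  have "continuous_on {-t..s} xs" by (rule cont_sub[OF c]) (use s in auto)
  then have "Inf ((\<lambda>\<tau>. g (xs \<tau>)) ` {-t..s}) \<le> g (xs (-t))"
    using s cont_bdd(1)[OF cont_comp_g[OF gc \<open>continuous_on {-t..s} xs\<close>]] by (intro cInf_lower) auto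
  then show ?thesis by simp
qed

lemma payR_bdd:
  fixes t h s :: real and g l :: "'a::topological_space \<Rightarrow> real"
  assumes gc: "continuous_on UNIV g" and c: "continuous_on {-t..0} xs"
  shows "bdd_above ((\<lambda>s. min (l (xs s)) (Inf ((\<lambda>\<tau>. g (xs \<tau>)) ` {-t..s}))) ` {-t..0})"
  using payR_elem_le[OF gc c] by (intro bdd_aboveI[where M="g (xs (-t))"]) auto

lemma payR_bound:
  fixes t h s :: real and g l :: "'a::topological_space \<Rightarrow> real"
  assumes gc: "continuous_on UNIV g" and t: "t \<ge> 0" and c: "continuous_on {-t..0} xs"
  shows "payR l g t xs \<le> g (xs (-t))"
  unfolding payR_def using t payR_elem_le[OF gc c] by (intro cSup_least) auto

lemma payR_lower:
  fixes t h s :: real and g l :: "'a::topological_space \<Rightarrow> real"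
  assumes gc: "continuous_on UNIV g" and t: "t \<ge> 0" and c: "continuous_on {-t..0} xs"
  shows "min (l (xs (-t))) (g (xs (-t))) \<le> payR l g t xs"
proof -
  have "min (l (xs (-t))) (Inf ((\<lambda>\<tau>. g (xs \<tau>)) ` {-t..-t})) \<le> payR l g t xs"
    unfolding payR_def
  proof (rule cSup_upper[OF _ payR_bdd[OF gc c]])
    show "min (l (xs (-t))) (Inf ((\<lambda>\<tau>. g (xs \<tau>)) ` {-t..-t}))
       \<in> (\<lambda>s. min (l (xs s)) (Inf ((\<lambda>\<tau>. g (xs \<tau>)) ` {-t..s}))) ` {-t..0}"
      using t by (intro image_eqI[where x="-t"]) auto
  qed
  then show ?thesis by simp
qed

lemma payR_glue:
  fixes t h s :: real and g l :: "'a::topological_space \<Rightarrow> real"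
  assumes gc: "continuous_on UNIV g" and h: "0 < h" "h \<le> t"
    and cw: "continuous_on {-t..-t+h} w" and cv: "continuous_on {-t+h..0} v"
    and cG: "continuous_on {-t..0} G"
    and Gw: "\<forall>s\<in>{-t..-t+h}. G s = w s" and Gv: "\<forall>s\<in>{-t+h..0}. G s = v s"
  shows "min (Inf ((\<lambda>\<tau>. g (w \<tau>)) ` {-t..-t+h})) (payR l g (t - h) v) \<le> payR l g t G"
proof -
  let ?m = "Inf ((\<lambda>\<tau>. g (w \<tau>)) ` {-t..-t+h})"
  have "payR l g (t - h) v = Sup ((\<lambda>s. min (l (v s)) (Inf ((\<lambda>\<tau>. g (v \<tau>)) ` {-t+h..s}))) ` {-t+h..0})"
    by (simp add: payR_def)
  moreover have "min ?m (Sup ((\<lambda>s. min (l (v s)) (Inf ((\<lambda>\<tau>. g (v \<tau>)) ` {-t+h..s}))) ` {-t+h..0}))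
      \<le> payR l g t G"
  proof (rule min_Sup_le)
    show "(\<lambda>s. min (l (v s)) (Inf ((\<lambda>\<tau>. g (v \<tau>)) ` {-t + h..s}))) ` {-t + h..0} \<noteq> {}" using h by auto
    show "\<forall>p\<in>(\<lambda>s. min (l (v s)) (Inf ((\<lambda>\<tau>. g (v \<tau>)) ` {-t + h..s}))) ` {-t + h..0}. min ?m p \<le> payR l g t G"
    proof
      fix p assume "p \<in> (\<lambda>s. min (l (v s)) (Inf ((\<lambda>\<tau>. g (v \<tau>)) ` {-t + h..s}))) ` {-t + h..0}"
      then obtain s where s: "s \<in> {-t+h..0}" and p: "p = min (l (v s)) (Inf ((\<lambda>\<tau>. g (v \<tau>)) ` {-t + h..s}))"
        by auto
      have cvs: "continuous_on {-t+h..s} v" by (rule cont_sub[OF cv]) (use s in auto)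
      have "min ?m (Inf ((\<lambda>\<tau>. g (v \<tau>)) ` {-t+h..s})) \<le> Inf ((\<lambda>\<tau>. g (G \<tau>)) ` {-t..s})"
      proof (rule inf_piece[where G=G and w=w and v=v, OF _ _ _ _ cont_comp_g[OF gc cw] cont_comp_g[OF gc cvs]])
        show "\<forall>\<tau>\<in>{-t..-t+h}. G \<tau> = w \<tau>" using Gw .
        show "\<forall>\<tau>\<in>{-t+h..s}. G \<tau> = v \<tau>" using Gv s by auto
      qed (use h s in auto)
      moreover have "G s = v s" using Gv s by auto
      ultimately have "min ?m p \<le> min (l (G s)) (Inf ((\<lambda>\<tau>. g (G \<tau>)) ` {-t..s}))"
        unfolding p by (auto simp: min_le_iff_disj)
      also have "\<dots> \<le> payR l g t G"
        unfolding payR_def using s h payR_bdd[OF gc cG] by (intro cSup_upper) auto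
      finally show "min ?m p \<le> payR l g t G" .
    qed
  qed
  ultimately show ?thesis by simp
qed

lemma Vgen_bdd:
  fixes f :: "'a::euclidean_space \<Rightarrow> 'u::euclidean_space \<Rightarrow> 'a" and s :: real
    and P :: "real \<Rightarrow> (real \<Rightarrow> 'a) \<Rightarrow> real" and g :: "'a \<Rightarrow> real"
  assumes Pb: "\<forall>t xs. t \<ge> 0 \<longrightarrow> continuous_on {-t..0} xs \<longrightarrow> P t xs \<le> g (xs (-t))"
    and s: "s \<ge> 0"
  shows "bdd_above {P s xs | u xs. admissible_control U s u \<and> trajectory f y s u xs}"
proof (rule bdd_aboveI[where M="g y"])
  fix p assume "p \<in> {P s xs | u xs. admissible_control U s u \<and> trajectory f y s u xs}"
  then obtain u xs where p: "p = P s xs" and tr: "trajectory f y s u xs" by auto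
  have "P s xs \<le> g (xs (-s))" using Pb s trajectory_cont[OF tr s] by auto
  also have "xs (-s) = y" using tr by (simp add: trajectory_def)
  finally show "p \<le> g y" using p by simp
qed

lemma Vgen_nonempty:
  fixes f :: "'a::euclidean_space \<Rightarrow> 'u::euclidean_space \<Rightarrow> 'a" and s :: real
    and P :: "real \<Rightarrow> (real \<Rightarrow> 'a) \<Rightarrow> real" and g :: "'a \<Rightarrow> real"
  assumes lip: "L-lipschitz_on UNIV (\<lambda>x. f x c)" and c: "c \<in> U" and s: "s \<ge> 0"
  shows "{P s xs | u xs. admissible_control U s u \<and> trajectory f y s u xs} \<noteq> {}"
  using const_trajectory_exists[where f=f and c=c, OF lip c s, of y] by blast

lemma Vgen_upper_elem:
  fixes f :: "'a::euclidean_space \<Rightarrow> 'u::euclidean_space \<Rightarrow> 'a" and s :: real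
    and P :: "real \<Rightarrow> (real \<Rightarrow> 'a) \<Rightarrow> real" and g :: "'a \<Rightarrow> real"
  assumes Pb: "\<forall>t xs. t \<ge> 0 \<longrightarrow> continuous_on {-t..0} xs \<longrightarrow> P t xs \<le> g (xs (-t))"
    and s: "s \<ge> 0" and adm: "admissible_control U s u" and tr: "trajectory f y s u xs"
  shows "P s xs \<le> Vgen P f U y s"
  unfolding Vgen_def using adm tr by (intro cSup_upper Vgen_bdd[OF Pb s]) auto

lemma Vgen_lower:
  fixes f :: "'a::euclidean_space \<Rightarrow> 'u::euclidean_space \<Rightarrow> 'a" and s :: real
    and P :: "real \<Rightarrow> (real \<Rightarrow> 'a) \<Rightarrow> real" and g :: "'a \<Rightarrow> real"
  assumes Pb: "\<forall>t xs. t \<ge> 0 \<longrightarrow> continuous_on {-t..0} xs \<longrightarrow> P t xs \<le> g (xs (-t))"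
    and lip: "L-lipschitz_on UNIV (\<lambda>x. f x c)" and c: "c \<in> U" and s: "s \<ge> 0"
    and Q: "\<forall>xs. continuous_on {-s..0} xs \<longrightarrow> xs (-s) = y \<longrightarrow> Q \<le> P s xs"
  shows "Q \<le> Vgen P f U y s"
proof -
  obtain xs where adm: "admissible_control U s (\<lambda>_. c)" and tr: "trajectory f y s (\<lambda>_. c) xs"
    using const_trajectory_exists[where f=f and c=c, OF lip c s, of y] by blast
  have "Q \<le> P s xs" using Q trajectory_cont[OF tr s] tr by (auto simp: trajectory_def)
  also have "\<dots> \<le> Vgen P f U y s" by (rule Vgen_upper_elem[OF Pb s adm tr])
  finally show ?thesis .
qed

lemma Vgen_DP:
  fixes f :: "'a::euclidean_space \<Rightarrow> 'u::euclidean_space \<Rightarrow> 'a" and s h :: real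
    and P :: "real \<Rightarrow> (real \<Rightarrow> 'a) \<Rightarrow> real" and g :: "'a \<Rightarrow> real"
  assumes Pb: "\<forall>t xs. t \<ge> 0 \<longrightarrow> continuous_on {-t..0} xs \<longrightarrow> P t xs \<le> g (xs (-t))"
    and Pg: "\<forall>t h w v G. 0 < h \<longrightarrow> h \<le> t \<longrightarrow> continuous_on {-t..-t+h} w \<longrightarrow> continuous_on {-t+h..0} v
              \<longrightarrow> continuous_on {-t..0} G \<longrightarrow> (\<forall>s\<in>{-t..-t+h}. G s = w s) \<longrightarrow> (\<forall>s\<in>{-t+h..0}. G s = v s)
              \<longrightarrow> min (Inf ((\<lambda>\<tau>. g (w \<tau>)) ` {-t..-t+h})) (P (t - h) v) \<le> P t G"
    and lip: "L-lipschitz_on UNIV (\<lambda>x. f x c)" and c: "c \<in> U"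
    and h: "0 < h" "h \<le> s"
  shows "\<exists>z. z (-s) = y \<and> (\<forall>r\<in>{-s..-s+h}. ((\<lambda>\<tau>. f (z \<tau>) c) has_integral (z r - y)) {-s..r})
           \<and> min (Inf ((\<lambda>\<tau>. g (z \<tau>)) ` {-s..-s+h})) (Vgen P f U (z (-s+h)) (s - h)) \<le> Vgen P f U y s"
proof -
  obtain z where z0: "z (-s) = y" and zI: "\<forall>r\<in>{-s..-s+h}. ((\<lambda>\<tau>. f (z \<tau>) c) has_integral (z r - y)) {-s..r}"
    using picard_global[OF lip, of "-s" "-s+h" y] h by auto
  define b where "b = -s + h"
  have ab: "-s \<le> b" and b0: "b \<le> 0" using h by (auto simp: b_def)
  have mb: "- b = s - h" by (simp add: b_def)
  have s0: "s \<ge> 0" and sh0: "s - h \<ge> 0" using h by auto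
  have cz: "continuous_on {-s..b} z" using traj_cont[OF zI[folded b_def] ab] .
  let ?m = "Inf ((\<lambda>\<tau>. g (z \<tau>)) ` {-s..b})"
  have "min ?m (Vgen P f U (z b) (s - h)) \<le> Vgen P f U y s"
    unfolding Vgen_def[of P f U "z b"]
  proof (rule min_Sup_le)
    show "{P (s - h) xs |u xs. admissible_control U (s - h) u \<and> trajectory f (z b) (s - h) u xs} \<noteq> {}"
      by (rule Vgen_nonempty[where f=f and c=c, OF lip c sh0])
    show "\<forall>p\<in>{P (s - h) xs |u xs. admissible_control U (s - h) u \<and> trajectory f (z b) (s - h) u xs}.
            min ?m p \<le> Vgen P f U y s"
    proof
      fix p assume "p \<in> {P (s - h) xs |u xs. admissible_control U (s - h) u \<and> trajectory f (z b) (s - h) u xs}"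
      then obtain u' v where p: "p = P (s - h) v" and adm': "admissible_control U (s - h) u'"
        and tr': "trajectory f (z b) (s - h) u' v" by auto
      let ?G = "\<lambda>r. if r \<le> b then z r else v r"
      let ?u = "\<lambda>\<tau>. if \<tau> < b then c else u' \<tau>"
      have admG: "admissible_control U s ?u"
        using admissible_glue[OF c ab b0, of u'] adm' mb by simp
      have trG: "trajectory f y s ?u ?G"
        using trajectory_glue[where f=f and c=c and w=z and b=b and a="-s" and x=y and u'=u' and v=v, OF zI[folded b_def] z0 _ ab b0] tr' mb by simp
      have cv: "continuous_on {b..0} v" using trajectory_cont[OF tr' sh0] by (simp add: b_def)
      have cG: "continuous_on {-s..0} ?G" using trajectory_cont[OF trG s0] .
      have vb: "v b = z b" using tr' by (simp add: trajectory_def b_def)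
      have e1: "\<forall>r\<in>{-s..-s+h}. ?G r = z r" by (simp add: b_def)
      have e2: "\<forall>r\<in>{-s+h..0}. ?G r = v r" using vb by (auto simp: b_def)
      have "min ?m (P (s - h) v) \<le> P s ?G"
        unfolding b_def
        by (rule Pg[rule_format, of h s z v]) (use h cz cv cG e1 e2 in \<open>auto simp: b_def\<close>)
      also have "\<dots> \<le> Vgen P f U y s" by (rule Vgen_upper_elem[OF Pb s0 admG trG])
      finally show "min ?m p \<le> Vgen P f U y s" using p by simp
    qed
  qed
  then show ?thesis using z0 zI unfolding b_def by blast
qed

definition phiF :: "real \<Rightarrow> 'a::euclidean_space \<Rightarrow> real \<Rightarrow> real \<Rightarrow> real \<Rightarrow> 'a \<Rightarrow> real \<Rightarrow> real \<Rightarrow> real \<Rightarrow> 'a \<Rightarrow> real \<Rightarrow> real" where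
  "phiF lam a b d mu xb K Tp sig y s =
     lam * ((y - a) \<bullet> (y - a) + (s - b)^2) + d * exp (mu * ((y - xb) \<bullet> (y - xb) + K * (s - Tp))) + sig * s"

definition phiX :: "real \<Rightarrow> 'a::euclidean_space \<Rightarrow> real \<Rightarrow> real \<Rightarrow> real \<Rightarrow> 'a \<Rightarrow> real \<Rightarrow> real \<Rightarrow> real \<Rightarrow> 'a \<Rightarrow> real \<Rightarrow> 'a" where
  "phiX lam a b d mu xb K Tp sig y s =
     (2 * lam) *\<^sub>R (y - a) + (d * exp (mu * ((y - xb) \<bullet> (y - xb) + K * (s - Tp))) * mu * 2) *\<^sub>R (y - xb)"

definition phiT :: "real \<Rightarrow> 'a::euclidean_space \<Rightarrow> real \<Rightarrow> real \<Rightarrow> real \<Rightarrow> 'a \<Rightarrow> real \<Rightarrow> real \<Rightarrow> real \<Rightarrow> 'a \<Rightarrow> real \<Rightarrow> real" where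
  "phiT lam a b d mu xb K Tp sig y s =
     2 * lam * (s - b) + d * exp (mu * ((y - xb) \<bullet> (y - xb) + K * (s - Tp))) * mu * K + sig"

lemma phi_C1:
  "C1_test (phiF lam a b d mu xb K Tp sig) (phiX lam a b d mu xb K Tp sig) (phiT lam a b d mu xb K Tp sig)"
  unfolding C1_test_def
proof (intro conjI allI impI)
  fix x :: 'a and t :: real
  show "((\<lambda>z. phiF lam a b d mu xb K Tp sig (fst z) (snd z)) has_derivative
          (\<lambda>h. phiX lam a b d mu xb K Tp sig x t \<bullet> fst h + phiT lam a b d mu xb K Tp sig x t * snd h)) (at (x, t))"
    unfolding phiF_def phiX_def phiT_def
    apply (rule derivative_eq_intros refl | simp)+
    apply (auto simp: algebra_simps inner_commute power2_eq_square inner_diff_right inner_diff_left)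
    done
next
  show "continuous_on (UNIV \<times> {0<..}) (\<lambda>z. phiX lam a b d mu xb K Tp sig (fst z) (snd z))"
    unfolding phiX_def by (intro continuous_intros)
  show "continuous_on (UNIV \<times> {0<..}) (\<lambda>z. phiT lam a b d mu xb K Tp sig (fst z) (snd z))"
    unfolding phiT_def by (intro continuous_intros)
qed

locale cmp =
  fixes W V :: "'a::euclidean_space \<Rightarrow> real \<Rightarrow> real" and g l :: "'a \<Rightarrow> real"
    and fi :: "nat \<Rightarrow> 'a \<Rightarrow> 'a" and Is :: "nat set" and ra :: bool and L Cg Cl :: real
  assumes finI: "finite Is" and neI: "Is \<noteq> {}"
    and lipf: "\<forall>i\<in>Is. L-lipschitz_on UNIV (fi i)"
    and lipg: "Cg-lipschitz_on UNIV g" and lipl: "Cl-lipschitz_on UNIV l"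
    and Wc: "continuous_on (UNIV \<times> {0..}) (\<lambda>z. W (fst z) (snd z))"
    and Wvisc: "\<forall>phi phix phit x0 t0. C1_test phi phix phit \<and> t0 > 0 \<and>
        local_max_at (\<lambda>y s. W y s - phi y s) x0 t0 \<longrightarrow>
        W x0 t0 \<le> g x0 \<and> ((ra \<and> W x0 t0 \<le> l x0) \<or> (\<exists>i\<in>Is. phit x0 t0 \<le> phix x0 t0 \<bullet> fi i x0))"
    and Wg0: "\<forall>x. W x 0 \<le> g x"
    and W0: "\<forall>x. W x 0 \<le> V x 0"
    and VDP: "\<forall>i\<in>Is. \<forall>y s h. 0 < h \<longrightarrow> h \<le> s \<longrightarrow> (\<exists>z. z (-s) = y \<and>
        (\<forall>r\<in>{-s..-s+h}. ((\<lambda>\<tau>. fi i (z \<tau>)) has_integral (z r - y)) {-s..r}) \<and>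
        min (Inf ((\<lambda>\<tau>. g (z \<tau>)) ` {-s..-s+h})) (V (z (-s+h)) (s - h)) \<le> V y s)"
    and Vra: "ra \<longrightarrow> (\<forall>y s. s \<ge> 0 \<longrightarrow> min (l y) (g y) \<le> V y s)"

context cmp
begin

lemma L0: "L \<ge> 0" using lipf neI by (auto simp: lipschitz_on_def)
lemma Cg0: "Cg \<ge> 0" using lipg by (auto simp: lipschitz_on_def)
lemma Cl0: "Cl \<ge> 0" using lipl by (auto simp: lipschitz_on_def)
lemma gc: "continuous_on UNIV g" using lipschitz_on_continuous_on[OF lipg] .
lemma glip: "g x - g y \<le> Cg * norm (x - y)"
  using lipg by (auto simp: lipschitz_on_def dist_norm dest!: bspec[of _ _ x] abs_le_D1)
lemma llip: "l x - l y \<le> Cl * norm (x - y)"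
  using lipl by (auto simp: lipschitz_on_def dist_norm dest!: bspec[of _ _ x] abs_le_D1)
lemma flip: "i \<in> Is \<Longrightarrow> norm (fi i x - fi i y) \<le> L * norm (x - y)"
  using lipf by (auto simp: lipschitz_on_def dist_norm)

lemma W_le_g: "t \<ge> 0 \<Longrightarrow> W x t \<le> g x"
proof (cases "t = 0")
  case True then show ?thesis using Wg0 by simp
next
  case False
  assume "t \<ge> 0"
  then have t0: "t > 0" using False by simp
  show ?thesis
  proof (rule ccontr)
    assume "\<not> W x t \<le> g x"
    then have pos: "W x t - g x > 0" by simp
    define F where "F = (\<lambda>z. W (fst z) (snd z) - g (fst z))"
    have Fc: "continuous_on (UNIV \<times> {0..}) F"
      unfolding F_def using Wc continuous_on_compose2[OF gc continuous_on_fst[OF continuous_on_id]]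
      by (intro continuous_intros) auto
    obtain r0 where r0: "r0 > 0" and r0F: "\<forall>p\<in>UNIV \<times> {0..}. dist p (x, t) < r0 \<longrightarrow> dist (F p) (F (x, t)) < W x t - g x"
      using Fc[unfolded continuous_on_iff] pos t0 by (metis UNIV_I atLeast_iff less_eq_real_def mem_Times_iff fst_conv snd_conv)
    define r where "r = min (r0/2) (t/2)"
    have r: "r > 0" "r < r0" "r < t" using r0 t0 by (auto simp: r_def)
    define S where "S = cball (x, t) r"
    have Ssub: "S \<subseteq> UNIV \<times> {0<..}"
    proof
      fix p assume "p \<in> S"
      then have "dist (snd p) t \<le> r" unfolding S_def
        by (metis dist_commute dist_snd_le mem_cball order_trans snd_conv)
      then show "p \<in> UNIV \<times> {0<..}" using r by (cases p) (auto simp: dist_real_def)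
    qed
    have Spos: "\<And>p. p \<in> S \<Longrightarrow> F p > 0"
    proof -
      fix p assume p: "p \<in> S"
      then have "p \<in> UNIV \<times> {0..}" using Ssub by auto
      moreover have "dist p (x, t) < r0" using p r unfolding S_def by (simp add: dist_commute)
      ultimately have "dist (F p) (F (x, t)) < W x t - g x" using r0F by auto
      moreover have "F (x, t) = W x t - g x" by (simp add: F_def)
      ultimately show "F p > 0" by (auto simp: dist_real_def)
    qed
    have WcS: "continuous_on S (\<lambda>z. W (fst z) (snd z))"
      by (rule continuous_on_subset[OF Wc]) (use Ssub in auto)
    have cS: "compact S" "S \<noteq> {}" using r by (auto simp: S_def)
    obtain pm where pm: "pm \<in> S" "\<forall>p\<in>S. W (fst p) (snd p) \<le> W (fst pm) (snd pm)"
      using continuous_attains_sup[OF cS WcS] by blast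
    define Mx where "Mx = W (fst pm) (snd pm) - W x t + 1"
    have Mx: "Mx > 0" using pm(2)[rule_format, of "(x,t)"] r by (auto simp: S_def Mx_def)
    define c where "c = Mx / r^2"
    let ?phi = "phiF c x t 0 0 x 0 0 0"
    have phi_eq: "?phi y s = c * (dist (y, s) (x, t))^2" for y s
    proof -
      have "(dist (y, s) (x, t))^2 = (dist y x)^2 + (dist s t)^2"
        by (simp add: dist_Pair_Pair)
      also have "(dist y x)^2 = (y - x) \<bullet> (y - x)" by (simp add: dist_norm power2_norm_eq_inner)
      also have "(dist s t)^2 = (s - t)^2" by (simp add: dist_real_def)
      finally show ?thesis by (simp add: phiF_def)
    qed
    have "continuous_on S (\<lambda>z. W (fst z) (snd z) - ?phi (fst z) (snd z))"
      unfolding phiF_def by (intro continuous_intros WcS)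
    then obtain p1 where p1: "p1 \<in> S" "\<forall>p\<in>S. W (fst p) (snd p) - ?phi (fst p) (snd p) \<le> W (fst p1) (snd p1) - ?phi (fst p1) (snd p1)"
      using continuous_attains_sup[OF cS] by blast
    obtain y1 s1 where p1e: "p1 = (y1, s1)" by (cases p1)
    have ge: "W y1 s1 - ?phi y1 s1 \<ge> W x t"
      using p1(2)[rule_format, of "(x,t)"] r p1e by (auto simp: S_def phi_eq)
    have inner: "dist (y1, s1) (x, t) < r"
    proof (rule ccontr)
      assume "\<not> dist (y1, s1) (x, t) < r"
      then have "dist (y1, s1) (x, t) = r" using p1(1) p1e by (auto simp: S_def dist_commute)
      then have "?phi y1 s1 = c * r^2" using phi_eq[of y1 s1] by simp
      also have "c * r^2 = Mx" using r by (simp add: c_def)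
      finally have "?phi y1 s1 = Mx" .
      then have "W y1 s1 \<ge> W x t + Mx" using ge by simp
      moreover have "W y1 s1 \<le> W (fst pm) (snd pm)" using pm(2) p1(1) p1e by auto
      ultimately show False by (simp add: Mx_def)
    qed
    have lm: "local_max_at (\<lambda>y s. W y s - ?phi y s) y1 s1"
      unfolding local_max_at_def
    proof (intro exI[of _ "r - dist (y1, s1) (x, t)"] conjI allI impI)
      show "r - dist (y1, s1) (x, t) > 0" using inner by simp
      fix y s assume "0 < s \<and> dist (y, s) (y1, s1) < r - dist (y1, s1) (x, t)"
      then have "dist (y, s) (x, t) \<le> r" using dist_triangle[of "(y,s)" "(x,t)" "(y1,s1)"] by simp
      then have "(y, s) \<in> S" by (simp add: S_def dist_commute)
      then show "W y s - ?phi y s \<le> W y1 s1 - ?phi y1 s1" using p1(2) p1e by fastforce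
    qed
    have s1: "s1 > 0" using p1(1) p1e Ssub by auto
    have "W y1 s1 \<le> g y1" using Wvisc phi_C1 lm s1 by blast
    moreover have "F (y1, s1) > 0" using Spos p1(1) p1e by auto
    ultimately show False by (simp add: F_def)
  qed
qed

end

context cmp
begin

lemma traj_bnd:
  assumes i: "i \<in> Is" and z0: "z (-s) = y"
    and zI: "\<forall>r\<in>{-s..-s+h}. ((\<lambda>\<tau>. fi i (z \<tau>)) has_integral (z r - y)) {-s..r}"
    and h: "0 \<le> h" "L * h \<le> 1/2" and r: "r \<in> {-s..-s+h}"
  shows "norm (z r - y) \<le> 2 * norm (fi i y) * (r + s)"
  using traj_short_bound[of L "fi i" "-s" "-s+h" z y r] lipf i zI h r by auto

lemma traj_taylor:
  assumes i: "i \<in> Is" and z0: "z (-s) = y"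
    and zI: "\<forall>r\<in>{-s..-s+h}. ((\<lambda>\<tau>. fi i (z \<tau>)) has_integral (z r - y)) {-s..r}"
    and h: "0 \<le> h" "L * h \<le> 1/2"
  shows "norm (z (-s+h) - y - h *\<^sub>R fi i y) \<le> 2 * L * norm (fi i y) * h^2"
  using traj_short_taylor[of L "fi i" "-s" "-s+h" z y "-s+h"] lipf i zI h by auto

lemma bottom:
  assumes t0: "t0 \<ge> 0" and IH: "\<forall>x. W x t0 \<le> V x t0" and i: "i \<in> Is"
    and s: "t0 \<le> s" and sL: "L * (s - t0) \<le> 1/2"
  shows "\<exists>w. norm (w - y) \<le> 2 * norm (fi i y) * (s - t0) \<and> W w t0 \<le> V y s"
proof (cases "s = t0")
  case True
  then show ?thesis using IH by (intro exI[of _ y]) auto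
next
  case False
  define h where "h = s - t0"
  have h: "0 < h" "h \<le> s" using False s t0 by (auto simp: h_def)
  obtain z where z0: "z (-s) = y"
    and zI: "\<forall>r\<in>{-s..-s+h}. ((\<lambda>\<tau>. fi i (z \<tau>)) has_integral (z r - y)) {-s..r}"
    and DP: "min (Inf ((\<lambda>\<tau>. g (z \<tau>)) ` {-s..-s+h})) (V (z (-s+h)) (s - h)) \<le> V y s"
    using VDP i h by blast
  have sh: "s - h = t0" by (simp add: h_def)
  have hL: "L * h \<le> 1/2" using sL by (simp add: h_def)
  have bnd: "norm (z r - y) \<le> 2 * norm (fi i y) * (s - t0)" if "r \<in> {-s..-s+h}" for r
  proof -
    have "norm (z r - y) \<le> 2 * norm (fi i y) * (r + s)"
      by (rule traj_bnd[OF i z0 zI _ hL that]) (use h in simp)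
    also have "\<dots> \<le> 2 * norm (fi i y) * (s - t0)"
      using that by (intro mult_left_mono) (auto simp: h_def)
    finally show ?thesis .
  qed
  have cz: "continuous_on {-s..-s+h} z" using traj_cont[OF zI] h by simp
  have cgz: "continuous_on {-s..-s+h} (\<lambda>\<tau>. g (z \<tau>))"
    using continuous_on_compose2[OF gc cz] by auto
  obtain r where r: "r \<in> {-s..-s+h}" and rmin: "\<forall>\<tau>\<in>{-s..-s+h}. g (z r) \<le> g (z \<tau>)"
    using continuous_attains_inf[OF compact_Icc _ cgz] h by auto
  have "g (z r) \<le> Inf ((\<lambda>\<tau>. g (z \<tau>)) ` {-s..-s+h})"
    using rmin h by (intro cInf_greatest) auto
  show ?thesis
  proof (cases "V (z (-s+h)) (s - h) \<le> Inf ((\<lambda>\<tau>. g (z \<tau>)) ` {-s..-s+h})")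
    case True
    then have "V (z (-s+h)) t0 \<le> V y s" using DP sh by simp
    moreover have "W (z (-s+h)) t0 \<le> V (z (-s+h)) t0" using IH by simp
    moreover have "norm (z (-s+h) - y) \<le> 2 * norm (fi i y) * (s - t0)" using bnd h by simp
    ultimately show ?thesis by (intro exI[of _ "z (-s+h)"]) auto
  next
    case False
    then have "Inf ((\<lambda>\<tau>. g (z \<tau>)) ` {-s..-s+h}) \<le> V y s" using DP by simp
    moreover have "W (z r) t0 \<le> g (z r)" using W_le_g t0 by simp
    moreover note \<open>g (z r) \<le> Inf ((\<lambda>\<tau>. g (z \<tau>)) ` {-s..-s+h})\<close>
    ultimately show ?thesis using bnd[OF r] by (intro exI[of _ "z r"]) auto
  qed
qed

end

lemma pigeon:
  fixes M :: "nat \<Rightarrow> real"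
  assumes mono: "\<And>k. M (Suc k) \<le> M k" and lo: "\<And>k. m0 \<le> M k" and hi: "M 0 \<le> B" and k: "\<kappa> > 0"
  shows "\<exists>k. M k - M (Suc k) \<le> \<kappa>"
proof (rule ccontr)
  assume "\<not> ?thesis"
  then have big: "\<And>k. M k - M (Suc k) > \<kappa>" by (simp add: not_le)
  have tel: "M 0 - M n \<ge> real n * \<kappa>" for n
  proof (induction n)
    case 0 then show ?case by simp
  next
    case (Suc n)
    have "M 0 - M (Suc n) = (M 0 - M n) + (M n - M (Suc n))" by simp
    also have "\<dots> \<ge> real n * \<kappa> + \<kappa>" using Suc big[of n] by linarith
    finally show ?case by (simp add: algebra_simps)
  qed
  obtain n where n: "(B - m0) / \<kappa> < real n" using reals_Archimedean2 by blast
  then have "B - m0 < real n * \<kappa>" using k by (simp add: field_simps)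
  moreover have "M 0 - M n \<le> B - m0" using hi lo[of n] by simp
  ultimately show False using tel[of n] by simp
qed

lemma sq_le_imp:
  fixes a b :: real
  assumes "a^2 \<le> b^2" "b \<ge> 0"
  shows "\<bar>a\<bar> \<le> b"
  using assms by (metis power2_abs power2_le_imp_le)

context cmp
begin

lemma window:
  assumes t0: "t0 \<ge> 0" and IH: "\<forall>x. W x t0 \<le> V x t0"
    and T: "t0 < Tp" "Tp \<le> t0 + 1/(4*(L+1))"
  shows "W xb Tp \<le> V xb Tp"
proof (rule ccontr)
  assume "\<not> W xb Tp \<le> V xb Tp"
  define \<delta> where "\<delta> = (W xb Tp - V xb Tp) / 4"
  have d0: "\<delta> > 0" using \<open>\<not> W xb Tp \<le> V xb Tp\<close> by (simp add: \<delta>_def)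
  have Ld: "L \<ge> 0" by (rule L0)
  define \<tau> where "\<tau> = 1/(4*(L+1))"
  have tau: "\<tau> > 0" "\<tau> \<le> 1/4" "L * \<tau> \<le> 1/4" using Ld by (auto simp: \<tau>_def field_simps)
  define T2 where "T2 = Tp + \<tau>"
  have T2: "t0 < T2" "T2 - t0 \<le> 2 * \<tau>" "L * (T2 - t0) \<le> 1/2" "Tp < T2"
  proof -
    show "t0 < T2" "Tp < T2" using T tau by (auto simp: T2_def)
    show "T2 - t0 \<le> 2 * \<tau>" using T by (simp add: T2_def \<tau>_def)
    then have "L * (T2 - t0) \<le> L * (2 * \<tau>)" using Ld by (rule mult_left_mono)
    then show "L * (T2 - t0) \<le> 1/2" using tau by simp
  qed
  obtain i0 where i0: "i0 \<in> Is" using neI by blast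
  define M0 where "M0 = (\<Sum>i\<in>Is. norm (fi i xb))"
  have M00: "M0 \<ge> 0" by (simp add: M0_def sum_nonneg)
  have fb: "norm (fi i x) \<le> M0 + L * norm (x - xb)" if "i \<in> Is" for i x
  proof -
    have "norm (fi i x) \<le> norm (fi i xb) + norm (fi i x - fi i xb)" by (rule norm_triangle_sub)
    also have "norm (fi i x - fi i xb) \<le> L * norm (x - xb)" using flip[OF that] .
    also have "norm (fi i xb) \<le> M0" unfolding M0_def using that finI
      by (intro member_le_sum) auto
    finally show ?thesis by simp
  qed
  define R where "R = 4 * M0 + 4"
  define K where "K = 1/\<tau> + 2 * R * (M0 + L * R)"
  define K1 where "K1 = M0 + L * (R + 1)"
  define C where "C = 2 * K1"
  have R4: "R \<ge> 4" using M00 by (simp add: R_def)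
  have K1C: "K1 \<ge> 0" "C \<ge> 0" using M00 Ld R4 by (auto simp: K1_def C_def)
  have Ktau: "K * \<tau> = 1 + 2 * R * M0 * \<tau> + 2 * R^2 * (L * \<tau>)"
    using tau by (simp add: K_def algebra_simps power2_eq_square)
  have Kt1: "K * \<tau> \<ge> 1" using Ktau R4 M00 tau Ld by (simp add: add_nonneg_nonneg)
  have RK: "R^2 - K * \<tau> \<ge> 1"
  proof -
    have "(2 * R * M0) * \<tau> \<le> (2 * R * M0) * (1/4)"
      using tau R4 M00 by (intro mult_left_mono) auto
    then have a: "2 * R * M0 * \<tau> \<le> R * M0 / 2" by (simp add: mult.commute)
    have "R^2 * (L * \<tau>) \<le> R^2 * (1/4)" using tau by (intro mult_left_mono) auto
    then have b: "2 * R^2 * (L * \<tau>) \<le> R^2 / 2" by simp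
    have mm: "M0 * M0 \<ge> 0" using M00 by simp
    have e1: "R * M0 / 2 + R^2 / 2 + 2 = 10 * (M0 * M0) + 18 * M0 + 10"
      by (simp add: R_def power2_eq_square field_simps)
    have e2: "R^2 = 16 * (M0 * M0) + 32 * M0 + 16"
      by (simp add: R_def power2_eq_square field_simps)
    have c: "R * M0 / 2 + R^2 / 2 + 2 \<le> R^2" using mm M00 e1 e2 by linarith
    show ?thesis using a b c Ktau by linarith
  qed

  define X where "X = cball xb R \<times> {t0..T2}"
  define Y where "Y = cball xb (R+1) \<times> {t0..T2}"
  define Z where "Z = cball xb (R+2) \<times> {t0..T2}"
  have cXYZ: "compact X" "compact Y" "compact Z" by (auto simp: X_def Y_def Z_def intro!: compact_Times)
  have neXY: "X \<noteq> {}" "Y \<noteq> {}" using T2 R4 by (auto simp: X_def Y_def)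
  have XZ: "X \<subseteq> Z" and YZ: "Y \<subseteq> Z" by (auto simp: X_def Y_def Z_def)
  have Zsub: "Z \<subseteq> UNIV \<times> {0..}" using t0 by (auto simp: Z_def)
  have WcZ: "continuous_on Z (\<lambda>p. W (fst p) (snd p))"
    by (rule continuous_on_subset[OF Wc Zsub])
  have WcX: "continuous_on X (\<lambda>p. W (fst p) (snd p))" by (rule continuous_on_subset[OF WcZ XZ])
  obtain pm where pm: "pm \<in> X" "\<forall>p\<in>X. W (fst p) (snd p) \<le> W (fst pm) (snd pm)"
    using continuous_attains_sup[OF cXYZ(1) neXY(1) WcX] by blast
  define BW where "BW = W (fst pm) (snd pm)"
  have BW: "\<And>x t. (x, t) \<in> X \<Longrightarrow> W x t \<le> BW" using pm(2) by (force simp: BW_def)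
  have fK1: "norm (fi i y) \<le> K1" if "i \<in> Is" "norm (y - xb) \<le> R + 1" for i y
  proof -
    have "norm (fi i y) \<le> M0 + L * norm (y - xb)" using fb[OF that(1)] .
    also have "L * norm (y - xb) \<le> L * (R + 1)" using that(2) Ld by (rule mult_left_mono)
    finally show ?thesis by (simp add: K1_def)
  qed
  have Wt0c: "continuous_on (cball xb (R + 1 + K1)) (\<lambda>w. W w t0)"
  proof -
    have "continuous_on (cball xb (R + 1 + K1)) (\<lambda>w. (w, t0))" by (intro continuous_intros)
    moreover have "(\<lambda>w. (w, t0)) ` cball xb (R + 1 + K1) \<subseteq> UNIV \<times> {0..}" using t0 by auto
    ultimately show ?thesis using continuous_on_compose2[OF Wc] by fastforce
  qed
  obtain wm where wm: "wm \<in> cball xb (R + 1 + K1)" "\<forall>w\<in>cball xb (R + 1 + K1). W wm t0 \<le> W w t0"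
    using continuous_attains_inf[OF compact_cball _ Wt0c] R4 K1C by fastforce
  define Wlow where "Wlow = W wm t0"
  have Vlow: "Wlow \<le> V y s" if "(y, s) \<in> Y" for y s
  proof -
    have y: "norm (y - xb) \<le> R + 1" and s: "t0 \<le> s" "s \<le> T2" using that by (auto simp: Y_def dist_norm norm_minus_commute)
    have "L * (s - t0) \<le> L * (T2 - t0)" using s Ld by (intro mult_left_mono) auto
    then have sL: "L * (s - t0) \<le> 1/2" using T2 by simp
    obtain w where w: "norm (w - y) \<le> 2 * norm (fi i0 y) * (s - t0)" "W w t0 \<le> V y s"
      using bottom[OF t0 IH i0 s(1) sL] by blast
    have "2 * norm (fi i0 y) * (s - t0) \<le> 2 * K1 * (1/2)"
    proof (rule mult_mono)
      show "2 * norm (fi i0 y) \<le> 2 * K1" using fK1[OF i0 y] by simp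
      show "s - t0 \<le> 1/2" using s T2 tau by simp
    qed (use K1C s in auto)
    then have "norm (w - y) \<le> K1" using w by simp
    then have "norm (w - xb) \<le> R + 1 + K1" using y norm_triangle_sub[of "w - xb" "y - xb"]
      by (smt (verit, ccfv_SIG) norm_minus_commute norm_triangle_ineq4 diff_diff_eq2 diff_add_cancel)
    then have "w \<in> cball xb (R + 1 + K1)" by (simp add: dist_norm norm_minus_commute)
    then show ?thesis using wm(2) w(2) by (force simp: Wlow_def)
  qed
  define B where "B = BW - Wlow"
  have T2pos: "T2 > 0" using T2 t0 by simp
  define \<sigma> where "\<sigma> = \<delta> / (2 * (T2 + 1))"
  have sig: "\<sigma> > 0" "\<sigma> * T2 \<le> \<delta> / 2" using d0 T2pos
    by (auto simp: \<sigma>_def field_simps)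
  define \<mu> where "\<mu> = \<bar>B\<bar> / \<delta> + 1"
  have mu: "\<mu> > 0" "\<delta> * \<mu> = \<bar>B\<bar> + \<delta>" using d0 by (auto simp: \<mu>_def field_simps add_pos_nonneg)
  define \<zeta> where "\<zeta> x t = \<delta> * exp (\<mu> * ((x - xb) \<bullet> (x - xb) + K * (t - Tp)))" for x t
  have zeta0: "\<zeta> x t > 0" for x t using d0 by (simp add: \<zeta>_def)
  have zetab: "\<zeta> xb Tp = \<delta>" by (simp add: \<zeta>_def)
  have zetabig: "\<zeta> x t \<ge> \<bar>B\<bar> + 2 * \<delta>" if "(x - xb) \<bullet> (x - xb) + K * (t - Tp) \<ge> 1" for x t
  proof -
    have "\<mu> \<le> \<mu> * ((x - xb) \<bullet> (x - xb) + K * (t - Tp))" using that mu by (simp add: mult_le_cancel_left1)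
    then have "exp \<mu> \<le> exp (\<mu> * ((x - xb) \<bullet> (x - xb) + K * (t - Tp)))" by simp
    moreover have "1 + \<mu> \<le> exp \<mu>" by simp
    ultimately have "1 + \<mu> \<le> exp (\<mu> * ((x - xb) \<bullet> (x - xb) + K * (t - Tp)))" by linarith
    then have "\<delta> * (1 + \<mu>) \<le> \<zeta> x t" unfolding \<zeta>_def using d0 by (intro mult_left_mono) auto
    then show ?thesis using mu by (simp add: algebra_simps)
  qed
  define \<Phi> where "\<Phi> lam x t y s = W x t - V y s - lam * ((x - y) \<bullet> (x - y) + (t - s)^2) - \<zeta> x t - \<sigma> * t"
    for lam x t y s
  define \<Psi> where "\<Psi> lam pq = \<Phi> lam (fst (fst pq)) (snd (fst pq)) (fst (snd pq)) (snd (snd pq))" for lam pq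
  have PhiB: "\<Phi> lam x t y s \<le> B" if "(x, t) \<in> X" "(y, s) \<in> Y" "lam \<ge> 0" for lam x t y s
  proof -
    have "lam * ((x - y) \<bullet> (x - y) + (t - s)^2) \<ge> 0" using that(3) by simp
    moreover have "\<sigma> * t \<ge> 0" using that(1) t0 sig by (auto simp: X_def)
    moreover have "W x t \<le> BW" using BW[OF that(1)] .
    moreover have "Wlow \<le> V y s" using Vlow[OF that(2)] .
    ultimately show ?thesis using zeta0[of x t] by (simp add: \<Phi>_def B_def)
  qed
  have xbX: "(xb, Tp) \<in> X" "(xb, Tp) \<in> Y" using T T2 R4 by (auto simp: X_def Y_def)
  define m0 where "m0 = 3 * \<delta> - \<sigma> * Tp"
  have Phib: "\<Phi> lam xb Tp xb Tp = m0" for lam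
  proof -
    have "W xb Tp - V xb Tp = 4 * \<delta>" by (simp add: \<delta>_def)
    then show ?thesis by (simp add: \<Phi>_def zetab m0_def)
  qed
  have m0b: "m0 \<ge> 5 * \<delta> / 2"
  proof -
    have "\<sigma> * Tp \<le> \<sigma> * T2" using sig T2 by (intro mult_left_mono) auto
    then show ?thesis using sig unfolding m0_def by linarith
  qed
  define Mk where "Mk k = Sup (\<Psi> (2^k) ` (X \<times> Y))" for k :: nat
  have Sne: "\<Psi> lam ` (X \<times> Y) \<noteq> {}" for lam using neXY by auto
  have Sbdd: "bdd_above (\<Psi> lam ` (X \<times> Y))" if "lam \<ge> 0" for lam
    using PhiB that by (intro bdd_aboveI[where M=B]) (force simp: \<Psi>_def)
  have Supper: "\<Psi> lam pq \<le> Sup (\<Psi> lam ` (X \<times> Y))" if "pq \<in> X \<times> Y" "lam \<ge> 0" for lam pq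
    using Sbdd[OF that(2)] that(1) by (intro cSup_upper) auto
  have Mk_lo: "m0 \<le> Mk k" for k
  proof -
    have "\<Psi> (2^k) ((xb, Tp), (xb, Tp)) \<le> Mk k" unfolding Mk_def using xbX by (intro Supper) auto
    then show ?thesis by (simp add: \<Psi>_def Phib)
  qed
  have Mk_hi: "Mk k \<le> B" for k
    unfolding Mk_def
  proof (rule cSup_least[OF Sne])
    fix v assume "v \<in> \<Psi> (2^k) ` (X \<times> Y)"
    then obtain p q where pq: "p \<in> X" "q \<in> Y" "v = \<Psi> (2^k) (p, q)" by auto
    show "v \<le> B" using PhiB[of "fst p" "snd p" "fst q" "snd q" "2^k"] pq by (simp add: \<Psi>_def)
  qed
  have Mk_mono: "Mk (Suc k) \<le> Mk k" for k
    unfolding Mk_def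
  proof (rule cSUP_mono)
    show "X \<times> Y \<noteq> {}" using neXY by auto
    show "bdd_above (\<Psi> (2^k) ` (X \<times> Y))" by (rule Sbdd) simp
    fix pq assume "pq \<in> X \<times> Y"
    have "(2::real)^k * ((fst (fst pq) - fst (snd pq)) \<bullet> (fst (fst pq) - fst (snd pq)) + (snd (fst pq) - snd (snd pq))^2)
       \<le> 2^(Suc k) * ((fst (fst pq) - fst (snd pq)) \<bullet> (fst (fst pq) - fst (snd pq)) + (snd (fst pq) - snd (snd pq))^2)"
      by (intro mult_right_mono) auto
    then show "\<exists>m\<in>X \<times> Y. \<Psi> (2 ^ Suc k) pq \<le> \<Psi> (2 ^ k) m"
      using \<open>pq \<in> X \<times> Y\<close> by (intro bexI[of _ pq]) (auto simp: \<Psi>_def \<Phi>_def)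
  qed

  obtain \<omega> where om: "\<omega> > 0" and omZ: "\<forall>p\<in>Z. \<forall>q\<in>Z. dist q p < \<omega> \<longrightarrow> dist (W (fst q) (snd q)) (W (fst p) (snd p)) < \<delta>"
    using compact_uniformly_continuous[OF WcZ cXYZ(3)] d0 unfolding uniformly_continuous_on_def by metis
  define \<gamma> where "\<gamma> = min \<omega> 1 / (4 * (C + 2))"
  have gam: "\<gamma> > 0" "\<gamma> \<le> 1/8" "2 * (C + 2) * \<gamma> < \<omega>" "2 * (C + 2) * \<gamma> \<le> 1/2"
  proof -
    show "\<gamma> > 0" using om K1C by (simp add: \<gamma>_def)
    have "min \<omega> 1 / (4 * (C + 2)) \<le> 1 / (4 * 2)"
      using K1C om by (intro frac_le) auto
    then show "\<gamma> \<le> 1/8" by (simp add: \<gamma>_def)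
    have "2 * (C + 2) * \<gamma> = min \<omega> 1 / 2" using K1C by (simp add: \<gamma>_def field_simps)
    then show "2 * (C + 2) * \<gamma> < \<omega>" using om by linarith
    show "2 * (C + 2) * \<gamma> \<le> 1/2" using \<open>2 * (C + 2) * \<gamma> = min \<omega> 1 / 2\<close> by linarith
  qed
  have gam2: "2 * C * \<gamma> + 4 * \<gamma> < \<omega>" "2 * C * \<gamma> + 4 * \<gamma> \<le> 1/2"
    using gam(3,4) by (simp_all add: algebra_simps)
  define \<rho> where "\<rho> = min \<gamma> (min (1/4) (\<delta> / (4 * (Cg + Cl + 1))))"
  have rho: "\<rho> > 0" "\<rho> \<le> \<gamma>" "\<rho> \<le> 1/4" "Cg * \<rho> \<le> \<delta>/4" "Cl * \<rho> \<le> \<delta>/4"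
  proof -
    show "\<rho> > 0" using gam d0 Cg0 Cl0 by (auto simp: \<rho>_def add_pos_nonneg)
    show "\<rho> \<le> \<gamma>" unfolding \<rho>_def by (rule min.cobounded1)
    show "\<rho> \<le> 1/4" unfolding \<rho>_def by (meson min.cobounded1 min.cobounded2 order_trans)
    have r3: "\<rho> \<le> \<delta> / (4 * (Cg + Cl + 1))" by (simp add: \<rho>_def)
    have "Cg * \<rho> \<le> (Cg + Cl + 1) * \<rho>" using Cg0 Cl0 \<open>\<rho> > 0\<close> by (intro mult_right_mono) auto
    also have "\<dots> \<le> (Cg + Cl + 1) * (\<delta> / (4 * (Cg + Cl + 1)))" using r3 Cg0 Cl0 by (intro mult_left_mono) auto
    also have "\<dots> = \<delta> / 4" using Cg0 Cl0 by (simp add: field_simps)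
    finally show "Cg * \<rho> \<le> \<delta>/4" .
    have "Cl * \<rho> \<le> (Cg + Cl + 1) * \<rho>" using Cg0 Cl0 \<open>\<rho> > 0\<close> by (intro mult_right_mono) auto
    also have "\<dots> \<le> (Cg + Cl + 1) * (\<delta> / (4 * (Cg + Cl + 1)))" using r3 Cg0 Cl0 by (intro mult_left_mono) auto
    also have "\<dots> = \<delta> / 4" using Cg0 Cl0 by (simp add: field_simps)
    finally show "Cl * \<rho> \<le> \<delta>/4" .
  qed
  define \<kappa> where "\<kappa> = min (\<rho>^2) (\<sigma> / (16 * (L + 1)))"
  have kap: "\<kappa> > 0" "\<kappa> \<le> \<rho>^2" "\<kappa> \<le> \<sigma> / (16 * (L + 1))" using rho sig Ld by (auto simp: \<kappa>_def)
  obtain k where k: "Mk k - Mk (Suc k) \<le> \<kappa>/2"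
    using pigeon[of Mk m0 B "\<kappa>/2"] Mk_mono Mk_lo Mk_hi kap by auto
  define lam where "lam = (2::real)^(Suc k)"
  have lam: "lam \<ge> 2" "(2::real)^k = lam / 2" by (auto simp: lam_def)
  define Q where "Q = 2 * L * C + C^2 + 1"
  have Q: "Q \<ge> 1" using Ld K1C by (simp add: Q_def)
  define h where "h = min \<gamma> (min \<tau> (min (1/(2*C+1)) (min (\<delta>/(Cg*C+1)) (\<sigma>/(4*lam*Q)))))"
  have h: "h > 0" "h \<le> \<gamma>" "h \<le> \<tau>" "C * h \<le> 1/2" "Cg * C * h \<le> \<delta>" "lam * h * Q \<le> \<sigma>/4"
  proof -
    have "Cg * C \<ge> 0" using Cg0 K1C by simp
    then have "\<delta>/(Cg*C+1) > 0" using d0 by simp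
    moreover have "1/(2*C+1) > 0" using K1C by simp
    moreover have "\<sigma>/(4*lam*Q) > 0" using sig lam Q by simp
    ultimately show "h > 0" using gam tau by (simp add: h_def)
    show "h \<le> \<gamma>" "h \<le> \<tau>" by (auto simp: h_def)
    have "h \<le> 1/(2*C+1)" by (simp add: h_def)
    then have "C * h \<le> C * (1/(2*C+1))" using K1C(2) by (rule mult_left_mono)
    also have "\<dots> \<le> 1/2" using K1C by (simp add: field_simps)
    finally show "C * h \<le> 1/2" .
    have "h \<le> \<delta>/(Cg*C+1)" by (simp add: h_def)
    then have "(Cg * C) * h \<le> (Cg * C) * (\<delta>/(Cg*C+1))" using K1C Cg0 by (intro mult_left_mono) auto
    also have "\<dots> \<le> \<delta>"
    proof -
      have a0: "Cg * C \<ge> 0" using Cg0 K1C by simp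
      have "(Cg * C) / (Cg * C + 1) \<le> 1" using a0 by simp
      then have "\<delta> * ((Cg * C) / (Cg * C + 1)) \<le> \<delta> * 1" using d0 by (intro mult_left_mono) auto
      moreover have "(Cg * C) * (\<delta> / (Cg * C + 1)) = \<delta> * ((Cg * C) / (Cg * C + 1))" by simp
      ultimately show ?thesis by (simp add: mult.commute)
    qed
    finally show "Cg * C * h \<le> \<delta>" .
    have "h \<le> \<sigma>/(4*lam*Q)" by (simp add: h_def)
    then have "(lam * Q) * h \<le> (lam * Q) * (\<sigma>/(4*lam*Q))" using lam Q by (intro mult_left_mono) auto
    also have "\<dots> = \<sigma>/4" using lam Q by (simp add: field_simps)
    finally show "lam * h * Q \<le> \<sigma>/4" by (simp add: algebra_simps)
  qed
  define \<eta> where "\<eta> = min (\<delta>/2) (min (\<sigma>*h/4) (\<kappa>/2))"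
  have eta: "\<eta> > 0" "\<eta> \<le> \<delta>/2" "\<eta> \<le> \<sigma>*h/4" "\<eta> \<le> \<kappa>/2" using d0 sig h kap by (auto simp: \<eta>_def)
  define M where "M = Mk (Suc k)"
  have Mdef: "M = Sup (\<Psi> lam ` (X \<times> Y))" by (simp add: M_def Mk_def lam_def)
  obtain pq where pq: "pq \<in> X \<times> Y" "M - \<eta> < \<Psi> lam pq"
    using less_cSupD[OF Sne, of "M - \<eta>" lam] eta Mdef by auto
  obtain yh sh where ysh: "snd pq = (yh, sh)" by (cases "snd pq")
  have yhY: "(yh, sh) \<in> Y" using pq ysh by (auto simp: mem_Times_iff)
  have cPhi: "continuous_on X (\<lambda>p. \<Phi> lam (fst p) (snd p) yh sh)"
    unfolding \<Phi>_def \<zeta>_def by (intro continuous_intros WcX)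
  obtain xt where xt: "xt \<in> X" "\<forall>p\<in>X. \<Phi> lam (fst p) (snd p) yh sh \<le> \<Phi> lam (fst xt) (snd xt) yh sh"
    using continuous_attains_sup[OF cXYZ(1) neXY(1) cPhi] by blast
  obtain xh th where xth: "xt = (xh, th)" by (cases xt)
  have xhX: "(xh, th) \<in> X" using xt xth by simp
  have P3: "\<Phi> lam x t yh sh \<le> \<Phi> lam xh th yh sh" if "(x, t) \<in> X" for x t
    using xt(2) that xth by fastforce
  have P1: "\<Phi> lam xh th yh sh > M - \<eta>"
  proof -
    have "\<Psi> lam pq = \<Phi> lam (fst (fst pq)) (snd (fst pq)) yh sh" by (simp add: \<Psi>_def ysh)
    also have "\<dots> \<le> \<Phi> lam xh th yh sh" using P3[of "fst (fst pq)" "snd (fst pq)"] pq by (auto simp: mem_Times_iff)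
    finally show ?thesis using pq by simp
  qed
  have P2: "\<Phi> lam xh th y s \<le> M" if "(y, s) \<in> Y" for y s
  proof -
    have "\<Psi> lam ((xh, th), (y, s)) \<le> M" unfolding Mdef using xhX that lam by (intro Supper) auto
    then show ?thesis by (simp add: \<Psi>_def)
  qed
  define D where "D = (xh - yh) \<bullet> (xh - yh) + (th - sh)^2"
  have D0: "D \<ge> 0" by (simp add: D_def)
  have Dk: "2^k * D \<le> \<kappa>"
  proof -
    have "\<Phi> (2^k) xh th yh sh = \<Phi> lam xh th yh sh + 2^k * D"
      using lam by (simp add: \<Phi>_def D_def algebra_simps)
    moreover have "\<Phi> (2^k) xh th yh sh \<le> Mk k"
    proof -
      have "\<Psi> (2^k) ((xh, th), (yh, sh)) \<le> Mk k" unfolding Mk_def using xhX yhY by (intro Supper) auto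
      then show ?thesis by (simp add: \<Psi>_def)
    qed
    ultimately show ?thesis using P1 k eta unfolding M_def by linarith
  qed
  have lamD: "lam * D \<le> 2 * \<kappa>" using Dk lam by simp
  have Dkap: "D \<le> \<kappa>"
  proof -
    have "1 * D \<le> 2^k * D" using D0 by (intro mult_right_mono) auto
    then show ?thesis using Dk by simp
  qed
  have xy_rho: "norm (xh - yh) \<le> \<rho>"
  proof -
    have "(norm (xh - yh))^2 \<le> \<rho>^2" using Dkap kap unfolding D_def power2_norm_eq_inner
      by (smt (verit) zero_le_power2)
    then show ?thesis using rho by (metis abs_norm_cancel sq_le_imp less_imp_le)
  qed
  have ts_rho: "\<bar>th - sh\<bar> \<le> \<rho>"
  proof -
    have "(th - sh)^2 \<le> \<rho>^2" using Dkap kap unfolding D_def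
      by (smt (verit) inner_ge_zero)
    then show ?thesis using rho by (intro sq_le_imp) auto
  qed
  have Plow: "\<Phi> lam xh th yh sh > 2 * \<delta>"
  proof -
    have "m0 \<le> M" unfolding M_def by (rule Mk_lo)
    then show ?thesis using P1 m0b eta by linarith
  qed

  have xhR: "norm (xh - xb) \<le> R" "t0 \<le> th" "th \<le> T2" using xhX by (auto simp: X_def dist_norm norm_minus_commute)
  have yhR: "norm (yh - xb) \<le> R + 1" "t0 \<le> sh" "sh \<le> T2" using yhY by (auto simp: Y_def dist_norm norm_minus_commute)
  have WV: "W xh th - V yh sh \<le> B" using BW[OF xhX] Vlow[OF yhY] by (simp add: B_def)
  have PhiWV: "\<Phi> lam xh th yh sh \<le> W xh th - V yh sh"
  proof -
    have "lam * D \<ge> 0" using lam D0 by simp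
    moreover have "\<sigma> * th \<ge> 0" using sig xhR t0 by simp
    ultimately show ?thesis using zeta0[of xh th] by (simp add: \<Phi>_def D_def)
  qed
  have K0: "K \<ge> 0" using tau Ld R4 M00 by (simp add: K_def)
  have interior: "norm (xh - xb) < R \<and> th < T2"
  proof (rule ccontr)
    assume "\<not> (norm (xh - xb) < R \<and> th < T2)"
    then have cs: "norm (xh - xb) \<ge> R \<or> th \<ge> T2" by auto
    have "(xh - xb) \<bullet> (xh - xb) + K * (th - Tp) \<ge> 1"
    proof (cases "norm (xh - xb) \<ge> R")
      case True
      then have "(xh - xb) \<bullet> (xh - xb) \<ge> R^2" using R4
        by (metis power2_norm_eq_inner power_mono less_imp_le le_less_trans zero_less_numeral
            order.trans zero_le_numeral)
      moreover have "K * (th - Tp) \<ge> K * (- \<tau>)" using K0 xhR T by (intro mult_left_mono) (auto simp: \<tau>_def)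
      ultimately show ?thesis using RK by simp
    next
      case False
      then have "th \<ge> T2" using cs by simp
      then have "K * (th - Tp) \<ge> K * \<tau>" using K0 by (intro mult_left_mono) (auto simp: T2_def)
      then show ?thesis using Kt1 inner_ge_zero[of "xh - xb"] by linarith
    qed
    then have "\<zeta> xh th \<ge> \<bar>B\<bar> + 2 * \<delta>" by (rule zetabig)
    moreover have "\<Phi> lam xh th yh sh \<le> W xh th - V yh sh - \<zeta> xh th"
    proof -
      have "lam * D \<ge> 0" using lam D0 by simp
      moreover have "\<sigma> * th \<ge> 0" using sig xhR t0 by simp
      ultimately show ?thesis by (simp add: \<Phi>_def D_def)
    qed
    ultimately show False using WV Plow d0 by linarith
  qed
  have fK1y: "norm (fi i yh) \<le> K1" if "i \<in> Is" for i using fK1[OF that yhR(1)] .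
  have notbottom: "th \<ge> t0 + \<gamma> \<and> sh \<ge> t0 + \<gamma>"
  proof (rule ccontr)
    assume nb: "\<not> (th \<ge> t0 + \<gamma> \<and> sh \<ge> t0 + \<gamma>)"
    have ths: "th - t0 \<le> \<gamma> + \<rho>" "sh - t0 \<le> \<gamma> + \<rho>" using nb ts_rho by auto
    have "L * (sh - t0) \<le> L * (T2 - t0)" using yhR Ld by (intro mult_left_mono) auto
    then have sL: "L * (sh - t0) \<le> 1/2" using T2 by simp
    obtain w where w: "norm (w - yh) \<le> 2 * norm (fi i0 yh) * (sh - t0)" "W w t0 \<le> V yh sh"
      using bottom[OF t0 IH i0 yhR(2) sL] by blast
    have "2 * norm (fi i0 yh) * (sh - t0) \<le> C * (\<gamma> + \<rho>)"
      unfolding C_def using fK1y[OF i0] ths yhR K1C by (intro mult_mono) auto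
    then have wy: "norm (w - yh) \<le> C * (\<gamma> + \<rho>)" using w by simp
    have "C * (\<gamma> + \<rho>) \<le> C * (\<gamma> + \<gamma>)" using rho K1C by (intro mult_left_mono) auto
    then have C2: "C * (\<gamma> + \<rho>) \<le> 2 * C * \<gamma>" by simp
    have wx: "norm (w - xh) \<le> C * (\<gamma> + \<rho>) + \<rho>"
      using wy xy_rho norm_triangle_ineq[of "w - yh" "yh - xh"] by (simp add: norm_minus_commute)
    have "norm (w - xb) \<le> R + 2"
      using wx xhR norm_triangle_ineq[of "w - xh" "xh - xb"] C2 gam gam2 rho by simp
    then have wZ: "(w, t0) \<in> Z" using T2 by (simp add: Z_def dist_norm norm_minus_commute)
    have xZ: "(xh, th) \<in> Z" using xhX XZ by auto
    have "dist (w, t0) (xh, th) \<le> dist (w, t0) (xh, t0) + dist (xh, t0) (xh, th)" by (rule dist_triangle)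
    also have "dist (w, t0) (xh, t0) = norm (w - xh)" by (simp add: dist_Pair_Pair dist_norm)
    also have "dist (xh, t0) (xh, th) = th - t0" using xhR by (simp add: dist_Pair_Pair dist_real_def)
    finally have "dist (w, t0) (xh, th) \<le> C * (\<gamma> + \<rho>) + \<rho> + (\<gamma> + \<rho>)" using wx ths by simp
    also have "\<dots> \<le> 2 * C * \<gamma> + 4 * \<gamma>" using C2 rho by simp
    finally have "dist (w, t0) (xh, th) < \<omega>" using gam2 by simp
    then have "dist (W w t0) (W xh th) < \<delta>" using omZ wZ xZ by fastforce
    then have "W xh th - W w t0 < \<delta>" by (simp add: dist_real_def)
    then show False using PhiWV w(2) Plow d0 by linarith
  qed
  have th_pos: "th > 0" using notbottom gam t0 by simp
  have sh_ge: "sh \<ge> 0" using yhR t0 by simp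
  have notA: "V yh sh < g yh - Cg * C * h"
  proof (rule ccontr)
    assume na: "\<not> V yh sh < g yh - Cg * C * h"
    have a: "W xh th \<le> g xh" using W_le_g th_pos by simp
    have b: "g xh - g yh \<le> Cg * norm (xh - yh)" by (rule glip)
    have c: "Cg * norm (xh - yh) \<le> Cg * \<rho>" using xy_rho Cg0 by (rule mult_left_mono)
    show False using na a b c rho h PhiWV Plow d0 by linarith
  qed
  define phi where "phi = phiF lam yh sh \<delta> \<mu> xb K Tp \<sigma>"
  have Phi_phi: "\<Phi> lam x t yh sh = W x t - V yh sh - phi x t" for x t
    by (simp add: \<Phi>_def phi_def phiF_def \<zeta>_def algebra_simps)
  have lmax: "local_max_at (\<lambda>y s. W y s - phi y s) xh th"
    unfolding local_max_at_def
  proof (intro exI[of _ "min (R - norm (xh - xb)) (min (th - t0) (T2 - th))"] conjI allI impI)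
    show "0 < min (R - norm (xh - xb)) (min (th - t0) (T2 - th))" using interior notbottom gam by simp
    fix y s assume ys: "0 < s \<and> dist (y, s) (xh, th) < min (R - norm (xh - xb)) (min (th - t0) (T2 - th))"
    have "dist y xh \<le> dist (y, s) (xh, th)" using dist_fst_le[of "(y,s)" "(xh,th)"] by simp
    moreover have "dist s th \<le> dist (y, s) (xh, th)" using dist_snd_le[of "(y,s)" "(xh,th)"] by simp
    ultimately have a: "norm (y - xh) < R - norm (xh - xb)" and b: "\<bar>s - th\<bar> < th - t0" "\<bar>s - th\<bar> < T2 - th"
      using ys by (auto simp: dist_norm dist_real_def)
    have "norm (y - xb) \<le> norm (y - xh) + norm (xh - xb)" using norm_triangle_ineq[of "y - xh" "xh - xb"] by simp
    then have "(y, s) \<in> X" using a b by (auto simp: X_def dist_norm norm_minus_commute)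
    then have "\<Phi> lam y s yh sh \<le> \<Phi> lam xh th yh sh" by (rule P3)
    then show "W y s - phi y s \<le> W xh th - phi xh th" using Phi_phi by simp
  qed
  have visc: "(ra \<and> W xh th \<le> l xh) \<or> (\<exists>i\<in>Is. phiT lam yh sh \<delta> \<mu> xb K Tp \<sigma> xh th \<le> phiX lam yh sh \<delta> \<mu> xb K Tp \<sigma> xh th \<bullet> fi i xh)"
    using Wvisc phi_C1[of lam yh sh \<delta> \<mu> xb K Tp \<sigma>] lmax th_pos unfolding phi_def by blast

  from visc show False
  proof
    assume ra_case: "ra \<and> W xh th \<le> l xh"
    have "min (l yh) (g yh) \<le> V yh sh" using Vra ra_case sh_ge by blast
    moreover have "Cg * C * h \<ge> 0" using Cg0 K1C h by simp
    then have "V yh sh < g yh" using notA by linarith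
    ultimately have lV: "l yh \<le> V yh sh" by (simp add: min_le_iff_disj)
    have "l xh - l yh \<le> Cl * norm (xh - yh)" by (rule llip)
    also have "Cl * norm (xh - yh) \<le> Cl * \<rho>" using xy_rho Cl0 by (rule mult_left_mono)
    finally show False using lV ra_case rho PhiWV Plow d0 by linarith
  next
    assume "\<exists>i\<in>Is. phiT lam yh sh \<delta> \<mu> xb K Tp \<sigma> xh th \<le> phiX lam yh sh \<delta> \<mu> xb K Tp \<sigma> xh th \<bullet> fi i xh"
    then obtain i where i: "i \<in> Is"
      and pde: "phiT lam yh sh \<delta> \<mu> xb K Tp \<sigma> xh th \<le> phiX lam yh sh \<delta> \<mu> xb K Tp \<sigma> xh th \<bullet> fi i xh"
      by blast
    define E where "E = \<delta> * exp (\<mu> * ((xh - xb) \<bullet> (xh - xb) + K * (th - Tp)))"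
    have E0: "E * \<mu> \<ge> 0" using d0 mu by (simp add: E_def)
    have phiT_eq: "phiT lam yh sh \<delta> \<mu> xb K Tp \<sigma> xh th = 2 * lam * (th - sh) + E * \<mu> * K + \<sigma>"
      by (simp add: phiT_def E_def)
    have phiX_eq: "phiX lam yh sh \<delta> \<mu> xb K Tp \<sigma> xh th \<bullet> fi i xh
        = 2 * lam * ((xh - yh) \<bullet> fi i xh) + E * \<mu> * (2 * ((xh - xb) \<bullet> fi i xh))"
      by (simp add: phiX_def E_def inner_add_left algebra_simps)
    have ip: "2 * ((xh - xb) \<bullet> fi i xh) \<le> K"
    proof -
      have "(xh - xb) \<bullet> fi i xh \<le> norm (xh - xb) * norm (fi i xh)" by (rule norm_cauchy_schwarz)
      also have "\<dots> \<le> R * (M0 + L * R)"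
      proof (rule mult_mono)
        show "norm (fi i xh) \<le> M0 + L * R"
          using fb[OF i, of xh] mult_left_mono[OF xhR(1) Ld] by simp
      qed (use xhR R4 in auto)
      finally have "2 * ((xh - xb) \<bullet> fi i xh) \<le> 2 * R * (M0 + L * R)" by simp
      moreover have "1 / \<tau> \<ge> 0" using tau by simp
      ultimately show ?thesis unfolding K_def by linarith
    qed
    have "E * \<mu> * (2 * ((xh - xb) \<bullet> fi i xh)) \<le> E * \<mu> * K" using ip E0 by (rule mult_left_mono)
    then have star: "2 * lam * (th - sh) + \<sigma> \<le> 2 * lam * ((xh - yh) \<bullet> fi i xh)"
      using pde phiT_eq phiX_eq by linarith
    have h_sh: "h \<le> sh" using h notbottom gam t0 by linarith
    obtain z where z0: "z (-sh) = yh"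
      and zI: "\<forall>r\<in>{-sh..-sh+h}. ((\<lambda>\<tau>. fi i (z \<tau>)) has_integral (z r - yh)) {-sh..r}"
      and DPi: "min (Inf ((\<lambda>\<tau>. g (z \<tau>)) ` {-sh..-sh+h})) (V (z (-sh+h)) (sh - h)) \<le> V yh sh"
      using VDP i h(1) h_sh by blast
    have hL: "L * h \<le> 1/2"
    proof -
      have "L * h \<le> L * \<tau>" using h Ld by (intro mult_left_mono) auto
      then show ?thesis using tau by simp
    qed
    have zb: "norm (z r - yh) \<le> C * h" if "r \<in> {-sh..-sh+h}" for r
    proof -
      have "norm (z r - yh) \<le> 2 * norm (fi i yh) * (r + sh)"
        by (rule traj_bnd[OF i z0 zI _ hL that]) (use h in simp)
      also have "\<dots> \<le> C * h" unfolding C_def using fK1y[OF i] that K1C by (intro mult_mono) auto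
      finally show ?thesis .
    qed
    have ginf: "g yh - Cg * C * h \<le> Inf ((\<lambda>\<tau>. g (z \<tau>)) ` {-sh..-sh+h})"
    proof (rule cInf_greatest)
      show "(\<lambda>\<tau>. g (z \<tau>)) ` {-sh..-sh+h} \<noteq> {}" using h by auto
      fix v assume "v \<in> (\<lambda>\<tau>. g (z \<tau>)) ` {-sh..-sh+h}"
      then obtain r where r: "r \<in> {-sh..-sh+h}" "v = g (z r)" by auto
      have "g yh - g (z r) \<le> Cg * norm (yh - z r)" by (rule glip)
      also have "Cg * norm (yh - z r) \<le> Cg * (C * h)" using zb[OF r(1)] Cg0 by (simp add: norm_minus_commute mult_left_mono)
      finally show "g yh - Cg * C * h \<le> v" using r by (simp add: mult.assoc)
    qed
    define zh where "zh = z (-sh+h)"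
    have Vz: "V zh (sh - h) \<le> V yh sh"
    proof -
      have "\<not> Inf ((\<lambda>\<tau>. g (z \<tau>)) ` {-sh..-sh+h}) \<le> V yh sh" using notA ginf by linarith
      then show ?thesis using DPi by (simp add: min_le_iff_disj zh_def)
    qed
    have zhy: "norm (zh - yh) \<le> C * h" unfolding zh_def using zb h by simp
    have zY: "(zh, sh - h) \<in> Y"
    proof -
      have "norm (zh - xb) \<le> norm (zh - yh) + norm (yh - xh) + norm (xh - xb)"
        using norm_triangle_ineq[of "zh - yh" "yh - xh"] norm_triangle_ineq[of "zh - xh" "xh - xb"] by simp
      also have "\<dots> \<le> 1/2 + 1/4 + R" using zhy h xy_rho rho xhR by (simp add: norm_minus_commute)
      finally have "norm (zh - xb) \<le> R + 1" by simp
      moreover have "t0 \<le> sh - h" using notbottom h by simp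
      moreover have "sh - h \<le> T2" using yhR h by simp
      ultimately show ?thesis by (simp add: Y_def dist_norm norm_minus_commute)
    qed
    define a where "a = xh - yh"
    define b where "b = zh - yh"
    define D' where "D' = (xh - zh) \<bullet> (xh - zh) + (th - (sh - h))^2"
    have key1: "lam * D - lam * D' < \<eta>"
    proof -
      have "\<Phi> lam xh th zh (sh - h) - \<Phi> lam xh th yh sh = V yh sh - V zh (sh - h) + lam * D - lam * D'"
        by (simp add: \<Phi>_def D_def D'_def algebra_simps)
      then show ?thesis using P2[OF zY] P1 Vz by linarith
    qed
    have key2: "D - D' = 2 * (a \<bullet> b) - b \<bullet> b - 2 * h * (th - sh) - h^2"
    proof -
      have "xh - zh = a - b" by (simp add: a_def b_def)
      then have "(xh - zh) \<bullet> (xh - zh) = a \<bullet> a - 2 * (a \<bullet> b) + b \<bullet> b"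
        by (simp add: inner_diff_left inner_diff_right inner_commute)
      moreover have "(th - (sh - h))^2 = (th - sh)^2 + 2 * h * (th - sh) + h^2"
        by (simp add: power2_eq_square algebra_simps)
      ultimately show ?thesis by (simp add: D_def D'_def a_def)
    qed
    define e where "e = b - h *\<^sub>R fi i yh"
    have enorm: "norm e \<le> L * C * h^2"
    proof -
      have "norm e \<le> 2 * L * norm (fi i yh) * h^2"
        using traj_taylor[OF i z0 zI _ hL] h unfolding e_def b_def zh_def by simp
      also have "\<dots> \<le> L * C * h^2" unfolding C_def using fK1y[OF i] Ld
        by (intro mult_right_mono) (auto simp: mult_left_mono)
      finally show ?thesis .
    qed
    have anorm: "norm a \<le> 1" using xy_rho rho unfolding a_def by simp
    have ab: "a \<bullet> b \<ge> h * (a \<bullet> fi i yh) - L * C * h^2"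
    proof -
      have "a \<bullet> b = h * (a \<bullet> fi i yh) + a \<bullet> e" by (simp add: e_def inner_diff_right)
      moreover have "a \<bullet> e \<ge> - (L * C * h^2)"
      proof -
        have "\<bar>a \<bullet> e\<bar> \<le> norm a * norm e" by (rule Cauchy_Schwarz_ineq2)
        also have "\<dots> \<le> 1 * (L * C * h^2)" using anorm enorm by (intro mult_mono) auto
        finally show ?thesis by simp
      qed
      ultimately show ?thesis by simp
    qed
    have bb: "b \<bullet> b \<le> C^2 * h^2"
    proof -
      have "b \<bullet> b = (norm b)^2" by (simp add: power2_norm_eq_inner)
      also have "\<dots> \<le> (C * h)^2" using zhy unfolding b_def by (intro power_mono) auto
      finally show ?thesis by (simp add: power_mult_distrib)
    qed
    have DD: "D - D' \<ge> 2 * h * (a \<bullet> fi i yh) - 2 * h * (th - sh) - h^2 * Q"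
      using key2 ab bb unfolding Q_def by (simp add: algebra_simps)
    define u1 where "u1 = lam * h * (a \<bullet> fi i xh)"
    define u2 where "u2 = lam * h * (a \<bullet> fi i yh)"
    define u3 where "u3 = lam * h * (th - sh)"
    define u4 where "u4 = lam * h^2 * Q"
    have F1: "2 * u2 - 2 * u3 - u4 < \<eta>"
    proof -
      have "lam * (2 * h * (a \<bullet> fi i yh) - 2 * h * (th - sh) - h^2 * Q) \<le> lam * (D - D')"
        using DD lam by (intro mult_left_mono) auto
      then show ?thesis using key1 unfolding u2_def u3_def u4_def by (simp add: algebra_simps)
    qed
    have F3: "2 * u3 + h * \<sigma> \<le> 2 * u1"
    proof -
      have "h * (2 * lam * (th - sh) + \<sigma>) \<le> h * (2 * lam * ((xh - yh) \<bullet> fi i xh))"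
        using star h by (intro mult_left_mono) auto
      then show ?thesis unfolding u1_def u3_def a_def by (simp add: algebra_simps)
    qed
    have F4: "2 * u1 - 2 * u2 \<le> h * \<sigma> / 4"
    proof -
      have "a \<bullet> fi i xh - a \<bullet> fi i yh = a \<bullet> (fi i xh - fi i yh)" by (simp add: inner_diff_right)
      also have "\<dots> \<le> norm a * norm (fi i xh - fi i yh)" by (rule norm_cauchy_schwarz)
      also have "\<dots> \<le> norm a * (L * norm a)" using flip[OF i, of xh yh] by (intro mult_left_mono) (auto simp: a_def)
      also have "\<dots> = L * (a \<bullet> a)" by (simp add: power2_norm_eq_inner[symmetric] power2_eq_square)
      also have "\<dots> \<le> L * D"
      proof -
        have "a \<bullet> a \<le> D" unfolding D_def a_def by simp
        then show ?thesis using Ld by (rule mult_left_mono)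
      qed
      finally have d1: "a \<bullet> fi i xh - a \<bullet> fi i yh \<le> L * D" .
      have "lam * (a \<bullet> fi i xh - a \<bullet> fi i yh) \<le> lam * (L * D)" using d1 lam by (intro mult_left_mono) auto
      also have "\<dots> = L * (lam * D)" by simp
      also have "\<dots> \<le> L * (2 * \<kappa>)" using lamD Ld by (rule mult_left_mono)
      also have "\<dots> \<le> L * (2 * (\<sigma> / (16 * (L + 1))))" using kap Ld by (intro mult_left_mono) auto
      also have "\<dots> \<le> \<sigma> / 8"
      proof -
        have "L * (2 * (\<sigma> / (16 * (L + 1)))) = (\<sigma> / 8) * (L / (L + 1))" using Ld by (simp add: field_simps)
        also have "\<dots> \<le> (\<sigma> / 8) * 1" using Ld sig by (intro mult_left_mono) auto
        finally show ?thesis by simp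
      qed
      finally have "lam * (a \<bullet> fi i xh - a \<bullet> fi i yh) \<le> \<sigma> / 8" .
      then have "(2 * h) * (lam * (a \<bullet> fi i xh - a \<bullet> fi i yh)) \<le> (2 * h) * (\<sigma> / 8)" using h by (intro mult_left_mono) auto
      then show ?thesis unfolding u1_def u2_def by (simp add: algebra_simps)
    qed
    have F6: "u4 \<le> h * \<sigma> / 4"
    proof -
      have "h * (lam * h * Q) \<le> h * (\<sigma> / 4)" using h by (intro mult_left_mono) auto
      then show ?thesis unfolding u4_def by (simp add: algebra_simps power2_eq_square)
    qed
    have "h * \<sigma> > 0" using h sig by simp
    moreover have "\<eta> \<le> h * \<sigma> / 4" using eta by (simp add: mult.commute)
    ultimately show False using F1 F3 F4 F6 by linarith
  qed
qed

end

context cmp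
begin

lemma comparison:
  assumes t: "t \<ge> 0"
  shows "W x t \<le> V x t"
proof -
  define \<tau> where "\<tau> = 1/(4*(L+1))"
  have tau: "\<tau> > 0" using L0 by (simp add: \<tau>_def)
  have ind: "\<forall>x. \<forall>t\<in>{0..real n * \<tau>}. W x t \<le> V x t" for n
  proof (induction n)
    case 0
    then show ?case using W0 by simp
  next
    case (Suc n)
    show ?case
    proof (intro allI ballI)
      fix x t assume t: "t \<in> {0..real (Suc n) * \<tau>}"
      show "W x t \<le> V x t"
      proof (cases "t \<le> real n * \<tau>")
        case True then show ?thesis using Suc t by auto
      next
        case False
        have t0: "real n * \<tau> \<ge> 0" using tau by simp
        have IH: "\<forall>x. W x (real n * \<tau>) \<le> V x (real n * \<tau>)" using Suc t0 by auto
        have "real (Suc n) * \<tau> = real n * \<tau> + 1/(4*(L+1))" by (simp add: \<tau>_def algebra_simps add_divide_distrib)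
        then have "t \<le> real n * \<tau> + 1/(4*(L+1))" using t by simp
        then show ?thesis using window[OF t0 IH, of t x] False by simp
      qed
    qed
  qed
  obtain n where "t / \<tau> < real n" using reals_Archimedean2 by blast
  then have "t \<le> real n * \<tau>" using tau by (simp add: field_simps)
  then show ?thesis using ind[of n] t by auto
qed

end

lemma Hhat_le:
  fixes f :: "'a::euclidean_space \<Rightarrow> 'u \<Rightarrow> 'a"
  assumes N: "N \<ge> 1"
    and Ev: "\<forall>i\<in>{1..N}. \<forall>x. f x (ud i) - vd i \<in> E x (xd i)"
    and bdd: "\<forall>i\<in>{1..N}. \<forall>x p. bdd_below ((\<lambda>w. p \<bullet> w) ` {vd i + e | e. e \<in> E x (xd i)})"
  shows "\<exists>i\<in>{1..N}. H_hat N xd vd E x p \<le> p \<bullet> f x (ud i)"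
proof -
  define F where "F i = Inf ((\<lambda>w. p \<bullet> w) ` {vd i + e | e. e \<in> E x (xd i)})" for i
  have "H_hat N xd vd E x p = Max (F ` {1..N})" by (simp add: H_hat_def F_def)
  moreover have "Max (F ` {1..N}) \<in> F ` {1..N}" using N by (intro Max_in) auto
  ultimately obtain i where i: "i \<in> {1..N}" "H_hat N xd vd E x p = F i" by auto
  have "F i \<le> p \<bullet> (vd i + (f x (ud i) - vd i))"
    unfolding F_def
  proof (rule cInf_lower)
    show "p \<bullet> (vd i + (f x (ud i) - vd i)) \<in> (\<lambda>w. p \<bullet> w) ` {vd i + e |e. e \<in> E x (xd i)}"
      using Ev i(1) by blast
    have "\<forall>x p. bdd_below ((\<lambda>w. p \<bullet> w) ` {vd i + e |e. e \<in> E x (xd i)})" using bdd i(1) by (rule bspec)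
    then have "\<forall>p. bdd_below ((\<lambda>w. p \<bullet> w) ` {vd i + e |e. e \<in> E x (xd i)})" by (rule spec)
    then show "bdd_below ((\<lambda>w. p \<bullet> w) ` {vd i + e |e. e \<in> E x (xd i)})" by (rule spec)
  qed
  then show ?thesis using i by auto
qed

theorem theorem1:
  fixes f :: "'a::euclidean_space \<Rightarrow> 'u::euclidean_space \<Rightarrow> 'a"
    and U :: "'u set"
    and g l :: "'a \<Rightarrow> real"
    and N :: nat
    and xd vd :: "nat \<Rightarrow> 'a"
    and ud :: "nat \<Rightarrow> 'u"
    and E :: "'a \<Rightarrow> 'a \<Rightarrow> 'a set"
    and Wa Wr :: "'a \<Rightarrow> real \<Rightarrow> real"
  assumes U_compact: "compact U" and U_ne: "U \<noteq> {}"
    and f_cont: "continuous_on (UNIV \<times> U) (\<lambda>z. f (fst z) (snd z))"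
    and f_lip: "\<exists>L. \<forall>u\<in>U. L-lipschitz_on UNIV (\<lambda>x. f x u)"
    and g_lip: "\<exists>C. C-lipschitz_on UNIV g"
    and l_lip: "\<exists>C. C-lipschitz_on UNIV l"
    and N_pos: "N \<ge> 1"
    and data_u: "\<forall>i\<in>{1..N}. ud i \<in> U"
    and data_v: "\<forall>i\<in>{1..N}. vd i = f (xd i) (ud i)"
    and E_closed: "\<forall>x y. closed (E x y)"
    and E_valid: "\<forall>i\<in>{1..N}. \<forall>x. f x (ud i) - vd i \<in> E x (xd i)"
    and H_hat_welldef: "\<forall>i\<in>{1..N}. \<forall>x p.
                         bdd_below ((\<lambda>w. p \<bullet> w) ` {vd i + e | e. e \<in> E x (xd i)})"
  shows "(visc_solution (F_avoid g (H_hat N xd vd E)) g Wa \<longrightarrow>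
            (\<forall>x t. t \<ge> 0 \<longrightarrow> Wa x t \<le> V_avoid f U g x t))
       \<and> (visc_solution (F_reach_avoid l g (H_hat N xd vd E)) (\<lambda>x. min (l x) (g x)) Wr \<longrightarrow>
            (\<forall>x t. t \<ge> 0 \<longrightarrow> Wr x t \<le> V_reach_avoid f U l g x t))"
proof -
  obtain L where L: "\<forall>u\<in>U. L-lipschitz_on UNIV (\<lambda>x. f x u)" using f_lip by blast
  obtain Cg where Cg: "Cg-lipschitz_on UNIV g" using g_lip by blast
  obtain Cl where Cl: "Cl-lipschitz_on UNIV l" using l_lip by blast
  have lipf: "\<forall>i\<in>{1..N}. L-lipschitz_on UNIV ((\<lambda>i x. f x (ud i)) i)" using L data_u by auto
  have gc: "continuous_on UNIV g" using lipschitz_on_continuous_on[OF Cg] .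
  have c1: "ud 1 \<in> U" using data_u N_pos by auto
  have lip1: "L-lipschitz_on UNIV (\<lambda>x. f x (ud 1))" using L c1 by auto
  have finI: "finite {1..N}" and neI: "{1..N} \<noteq> {}" using N_pos by auto
  have Hle: "\<exists>i\<in>{1..N}. H_hat N xd vd E x p \<le> p \<bullet> f x (ud i)" for x p
    by (rule Hhat_le[where f=f and ud=ud and vd=vd and E=E and xd=xd, OF N_pos E_valid H_hat_welldef])
  have PbA: "\<forall>t xs. t \<ge> 0 \<longrightarrow> continuous_on {-t..0} xs \<longrightarrow> payA g t xs \<le> g (xs (-t))"
    using payA_bound[OF gc] by blast
  have PgA: "\<forall>t h w v G. 0 < h \<longrightarrow> h \<le> t \<longrightarrow> continuous_on {-t..-t+h} w \<longrightarrow> continuous_on {-t+h..0} v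
              \<longrightarrow> continuous_on {-t..0} G \<longrightarrow> (\<forall>s\<in>{-t..-t+h}. G s = w s) \<longrightarrow> (\<forall>s\<in>{-t+h..0}. G s = v s)
              \<longrightarrow> min (Inf ((\<lambda>\<tau>. g (w \<tau>)) ` {-t..-t+h})) (payA g (t - h) v) \<le> payA g t G"
    using payA_glue[OF gc] by blast
  have part1: "visc_solution (F_avoid g (H_hat N xd vd E)) g Wa \<longrightarrow>
            (\<forall>x t. t \<ge> 0 \<longrightarrow> Wa x t \<le> V_avoid f U g x t)"
  proof (intro impI allI)
    fix x and t :: real assume vs: "visc_solution (F_avoid g (H_hat N xd vd E)) g Wa" and t: "t \<ge> 0"
    have Wc: "continuous_on (UNIV \<times> {0..}) (\<lambda>z. Wa (fst z) (snd z))"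
      and sub: "visc_subsolution (F_avoid g (H_hat N xd vd E)) Wa" and init: "\<forall>x. Wa x 0 = g x"
      using vs by (auto simp: visc_solution_def)
    have "cmp Wa (\<lambda>y s. Vgen (payA g) f U y s) g g (\<lambda>i x. f x (ud i)) {1..N} False L Cg Cg"
    proof (rule cmp.intro)
      show "finite {1..N}" by (rule finI)
      show "{1..N} \<noteq> {}" by (rule neI)
      show "\<forall>i\<in>{1..N}. L-lipschitz_on UNIV (\<lambda>x. f x (ud i))" using lipf by simp
      show "Cg-lipschitz_on UNIV g" by (rule Cg)
      show "Cg-lipschitz_on UNIV g" by (rule Cg)
      show "continuous_on (UNIV \<times> {0..}) (\<lambda>z. Wa (fst z) (snd z))" by (rule Wc)
      show "\<forall>phi phix phit x0 t0. C1_test phi phix phit \<and> 0 < t0 \<and> local_max_at (\<lambda>y s. Wa y s - phi y s) x0 t0 \<longrightarrow>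
          Wa x0 t0 \<le> g x0 \<and> (False \<and> Wa x0 t0 \<le> g x0 \<or> (\<exists>i\<in>{1..N}. phit x0 t0 \<le> phix x0 t0 \<bullet> f x0 (ud i)))"
      proof (intro allI impI)
        fix phi phix phit x0 t0
        assume "C1_test phi phix phit \<and> 0 < t0 \<and> local_max_at (\<lambda>y s. Wa y s - phi y s) x0 t0"
        then have "F_avoid g (H_hat N xd vd E) x0 t0 (Wa x0 t0) (phit x0 t0) (phix x0 t0) \<ge> 0"
          using sub unfolding visc_subsolution_def by blast
        then have a: "Wa x0 t0 \<le> g x0" and b: "phit x0 t0 \<le> H_hat N xd vd E x0 (phix x0 t0)"
          by (auto simp: F_avoid_def)
        obtain i where "i \<in> {1..N}" "H_hat N xd vd E x0 (phix x0 t0) \<le> phix x0 t0 \<bullet> f x0 (ud i)"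
          using Hle by blast
        then show "Wa x0 t0 \<le> g x0 \<and> (False \<and> Wa x0 t0 \<le> g x0 \<or> (\<exists>i\<in>{1..N}. phit x0 t0 \<le> phix x0 t0 \<bullet> f x0 (ud i)))"
          using a b by force
      qed
      show "\<forall>x. Wa x 0 \<le> g x" using init by simp
      show "\<forall>x. Wa x 0 \<le> Vgen (payA g) f U x 0"
      proof
        fix x
        have "g x \<le> Vgen (payA g) f U x 0"
          by (rule Vgen_lower[where f=f and c="ud 1", OF PbA lip1 c1]) (auto simp: payA_zero)
        then show "Wa x 0 \<le> Vgen (payA g) f U x 0" using init by simp
      qed
      show "\<forall>i\<in>{1..N}. \<forall>y (s::real) (h::real). 0 < h \<longrightarrow> h \<le> s \<longrightarrow> (\<exists>z. z (-s) = y \<and>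
          (\<forall>r\<in>{-s..-s+h}. ((\<lambda>\<tau>. f (z \<tau>) (ud i)) has_integral (z r - y)) {-s..r}) \<and>
          min (Inf ((\<lambda>\<tau>. g (z \<tau>)) ` {-s..-s+h})) (Vgen (payA g) f U (z (-s+h)) (s - h)) \<le> Vgen (payA g) f U y s)"
      proof (intro ballI allI impI)
        fix i y and s h :: real assume i: "i \<in> {1..N}" and h: "0 < h" "h \<le> s"
        have li: "L-lipschitz_on UNIV (\<lambda>x. f x (ud i))" using lipf i by simp
        have ci: "ud i \<in> U" using data_u i by simp
        show "\<exists>z. z (-s) = y \<and>
          (\<forall>r\<in>{-s..-s+h}. ((\<lambda>\<tau>. f (z \<tau>) (ud i)) has_integral (z r - y)) {-s..r}) \<and>
          min (Inf ((\<lambda>\<tau>. g (z \<tau>)) ` {-s..-s+h})) (Vgen (payA g) f U (z (-s+h)) (s - h)) \<le> Vgen (payA g) f U y s"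
          by (rule Vgen_DP[where f=f and c="ud i", OF PbA PgA li ci h])
      qed
      show "False \<longrightarrow> (\<forall>y (s::real). 0 \<le> s \<longrightarrow> min (g y) (g y) \<le> Vgen (payA g) f U y s)" by simp
    qed
    then have "Wa x t \<le> Vgen (payA g) f U x t" using t by (rule cmp.comparison)
    then show "Wa x t \<le> V_avoid f U g x t" by (simp add: V_avoid_Vgen)
  qed
  have PbR: "\<forall>t xs. t \<ge> 0 \<longrightarrow> continuous_on {-t..0} xs \<longrightarrow> payR l g t xs \<le> g (xs (-t))"
    using payR_bound[OF gc] by blast
  have PgR: "\<forall>t h w v G. 0 < h \<longrightarrow> h \<le> t \<longrightarrow> continuous_on {-t..-t+h} w \<longrightarrow> continuous_on {-t+h..0} v
              \<longrightarrow> continuous_on {-t..0} G \<longrightarrow> (\<forall>s\<in>{-t..-t+h}. G s = w s) \<longrightarrow> (\<forall>s\<in>{-t+h..0}. G s = v s)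
              \<longrightarrow> min (Inf ((\<lambda>\<tau>. g (w \<tau>)) ` {-t..-t+h})) (payR l g (t - h) v) \<le> payR l g t G"
    using payR_glue[OF gc] by blast
  have VlowR: "min (l y) (g y) \<le> Vgen (payR l g) f U y s" if "s \<ge> 0" for y s
    by (rule Vgen_lower[where f=f and c="ud 1", OF PbR lip1 c1 that]) (use payR_lower[OF gc that] in auto)
  have part2: "visc_solution (F_reach_avoid l g (H_hat N xd vd E)) (\<lambda>x. min (l x) (g x)) Wr \<longrightarrow>
            (\<forall>x t. t \<ge> 0 \<longrightarrow> Wr x t \<le> V_reach_avoid f U l g x t)"
  proof (intro impI allI)
    fix x and t :: real assume vs: "visc_solution (F_reach_avoid l g (H_hat N xd vd E)) (\<lambda>x. min (l x) (g x)) Wr" and t: "t \<ge> 0"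
    have Wc: "continuous_on (UNIV \<times> {0..}) (\<lambda>z. Wr (fst z) (snd z))"
      and sub: "visc_subsolution (F_reach_avoid l g (H_hat N xd vd E)) Wr"
      and init: "\<forall>x. Wr x 0 = min (l x) (g x)"
      using vs by (auto simp: visc_solution_def)
    have "cmp Wr (\<lambda>y s. Vgen (payR l g) f U y s) g l (\<lambda>i x. f x (ud i)) {1..N} True L Cg Cl"
    proof (rule cmp.intro)
      show "finite {1..N}" by (rule finI)
      show "{1..N} \<noteq> {}" by (rule neI)
      show "\<forall>i\<in>{1..N}. L-lipschitz_on UNIV (\<lambda>x. f x (ud i))" using lipf by simp
      show "Cg-lipschitz_on UNIV g" by (rule Cg)
      show "Cl-lipschitz_on UNIV l" by (rule Cl)
      show "continuous_on (UNIV \<times> {0..}) (\<lambda>z. Wr (fst z) (snd z))" by (rule Wc)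
      show "\<forall>phi phix phit x0 t0. C1_test phi phix phit \<and> 0 < t0 \<and> local_max_at (\<lambda>y s. Wr y s - phi y s) x0 t0 \<longrightarrow>
          Wr x0 t0 \<le> g x0 \<and> (True \<and> Wr x0 t0 \<le> l x0 \<or> (\<exists>i\<in>{1..N}. phit x0 t0 \<le> phix x0 t0 \<bullet> f x0 (ud i)))"
      proof (intro allI impI)
        fix phi phix phit x0 t0
        assume "C1_test phi phix phit \<and> 0 < t0 \<and> local_max_at (\<lambda>y s. Wr y s - phi y s) x0 t0"
        then have "F_reach_avoid l g (H_hat N xd vd E) x0 t0 (Wr x0 t0) (phit x0 t0) (phix x0 t0) \<ge> 0"
          using sub unfolding visc_subsolution_def by blast
        then have a: "Wr x0 t0 \<le> g x0"
          and b: "Wr x0 t0 \<le> l x0 \<or> phit x0 t0 \<le> H_hat N xd vd E x0 (phix x0 t0)"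
          by (auto simp: F_reach_avoid_def)
        obtain i where "i \<in> {1..N}" "H_hat N xd vd E x0 (phix x0 t0) \<le> phix x0 t0 \<bullet> f x0 (ud i)"
          using Hle by blast
        then show "Wr x0 t0 \<le> g x0 \<and> (True \<and> Wr x0 t0 \<le> l x0 \<or> (\<exists>i\<in>{1..N}. phit x0 t0 \<le> phix x0 t0 \<bullet> f x0 (ud i)))"
          using a b by force
      qed
      show "\<forall>x. Wr x 0 \<le> g x" using init by simp
      show "\<forall>x. Wr x 0 \<le> Vgen (payR l g) f U x 0" using init VlowR by simp
      show "\<forall>i\<in>{1..N}. \<forall>y (s::real) (h::real). 0 < h \<longrightarrow> h \<le> s \<longrightarrow> (\<exists>z. z (-s) = y \<and>
          (\<forall>r\<in>{-s..-s+h}. ((\<lambda>\<tau>. f (z \<tau>) (ud i)) has_integral (z r - y)) {-s..r}) \<and>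
          min (Inf ((\<lambda>\<tau>. g (z \<tau>)) ` {-s..-s+h})) (Vgen (payR l g) f U (z (-s+h)) (s - h)) \<le> Vgen (payR l g) f U y s)"
      proof (intro ballI allI impI)
        fix i y and s h :: real assume i: "i \<in> {1..N}" and h: "0 < h" "h \<le> s"
        have li: "L-lipschitz_on UNIV (\<lambda>x. f x (ud i))" using lipf i by simp
        have ci: "ud i \<in> U" using data_u i by simp
        show "\<exists>z. z (-s) = y \<and>
          (\<forall>r\<in>{-s..-s+h}. ((\<lambda>\<tau>. f (z \<tau>) (ud i)) has_integral (z r - y)) {-s..r}) \<and>
          min (Inf ((\<lambda>\<tau>. g (z \<tau>)) ` {-s..-s+h})) (Vgen (payR l g) f U (z (-s+h)) (s - h)) \<le> Vgen (payR l g) f U y s"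
          by (rule Vgen_DP[where f=f and c="ud i", OF PbR PgR li ci h])
      qed
      show "True \<longrightarrow> (\<forall>y (s::real). 0 \<le> s \<longrightarrow> min (l y) (g y) \<le> Vgen (payR l g) f U y s)" using VlowR by blast
    qed
    then have "Wr x t \<le> Vgen (payR l g) f U x t" using t by (rule cmp.comparison)
    then show "Wr x t \<le> V_reach_avoid f U l g x t" by (simp add: V_reach_avoid_Vgen)
  qed
  show ?thesis using part1 part2 by blast
qed

end
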